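(* Let $R=S(M_0)$ and $L=\mathcal{A}M_{-1}=S(M_0)\otimes M_{-1}$, viewed as an $R$-module via $\mathbf y\cdot(\mathbf y'\odot x^{\mathbf k})=\mathbf y\odot\mathbf y'\odot x^{\mathbf k}$. Equip $L$ with the bilinear product $\rhd$, with $\nabla\colon L\to \mathrm{End}_{\mathbb K}(L)$, $\nabla_X Y=X\rhd Y$, and with the anchor $\rho\colon L\to \mathrm{Der}_{\mathbb K}(S(M_0),S(M_0))$, $\rho(X)(\mathbf y)=X\rhd \mathbf y$. Then $(L,\nabla,\rho)$ is a pre-Lie-Rinehart algebra over $R$, the Lie bracket being $[X,Y]=X\rhd Y-Y\rhd X$.
   Context: Fix a field $\mathbb K$ and a finite set $C$ of decorations. Let $\overline N(C)$ be the commutative polynomial algebra over $\mathbb K$ in the variables $x^a_j$, $a\in C$, $j\in\{-1,0,1,2,\dots\}$. A monomial is $x^{\mathbf k}=\prod_{j,a}(x^a_j)^{k^a_j}$ with finitely supported nonnegative integer exponents; its weight is $\mathrm{wt}(x^{\mathbf k})=\sum_{j,a} j\,k^a_j$. Let $\partial$ be the derivation of $\overline N(C)$ with $\partial x^a_j=x^a_{j+1}$. For $n\in\{-1,0\}$ let $M_n$ be the span of the monomials of weight $n$ (non-constant ones for $n=0$). $S(V)$ denotes the symmetric algebra of $V$, with product $\odot$ and unit $\mathbf 1$; elements of $S(M_0)$ are called multiaromas. Elements of $\mathcal{A}M_{-1}$ are spanned by $\mathbf y\odot x^{\mathbf k}$ with $\mathbf y\in S(M_0)$ a product of monomials and $x^{\mathbf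 k}\in M_{-1}$. The product $\rhd$ is defined (and extended bilinearly) as follows. For monomials $x^{\mathbf k}\in M_{-1}$ and $P\in M_0\cup M_{-1}$, $x^{\mathbf k}\rhd P=x^{\mathbf k}\cdot\partial P$ (product in $\overline N(C)$). For $\mathbf y=x^{\kappa^1}\odot\cdots\odot x^{\kappa^m}\in S(M_0)$: $x^{\mathbf k}\rhd \mathbf y=\sum_{i=1}^m x^{\kappa^1}\odot\cdots\odot (x^{\mathbf k}\rhd x^{\kappa^i})\odot\cdots\odot x^{\kappa^m}$ and $(\mathbf y^1\odot x^{\mathbf k})\rhd \mathbf y=\mathbf y^1\odot(x^{\mathbf k}\rhd\mathbf y)$. Finally $(\mathbf y^1\odot x^{\mathbf k^1})\rhd(\mathbf y^2\odot x^{\mathbf k^2})=\mathbf y^1\odot(x^{\mathbf k^1}\rhd\mathbf y^2)\odot x^{\mathbf k^2}+\mathbf y^1\odot\mathbf y^2\odot(x^{\mathbf k^1}\rhd x^{\mathbf k^2})$. Definition: given a unital commutative $\mathbb K$-algebra $R$ and an $R$-module $L$ with an $R$-linear map $\rho\colon L\to\mathrm{Der}_{\mathbb K}(R,R)$ and a map $\nabla\colon L\to\mathrm{End}_{\mathbb K}(L)$, write $X\rhd Y=\nabla_XY$ and $[X,Y]=X\rhd Y-Y\rhd X$. Then $L$ is a pre-Lie-Rinehart algebra if: $(L,[-,-])$ is a Lie algebra over $\mathbb K$; $\rho$ is a Lie algebra homomorphism; for $f\in R$, $X,Y\in L$, $[X,fY]=(\rho(X)f)Y+f[X,Y]$; and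 $(L,\rhd)$ is pre-Lie: $X\rhd(Y\rhd Z)-(X\rhd Y)\rhd Z=Y\rhd(X\rhd Z)-(Y\rhd X)\rhd Z$. *)

theory Defs
  imports Main "HOL-Library.Multiset" "HOL-Library.Function_Algebras"
begin

text \<open>A K-vector space is realised inside a function space 'b => 'k with pointwise
  addition (from Function_Algebras) and the scalar multiplication below.\<close>

definition smult :: "'k::times \<Rightarrow> ('b \<Rightarrow> 'k) \<Rightarrow> ('b \<Rightarrow> 'k)" (infixr "\<cdot>\<^sub>s" 75) where
  "c \<cdot>\<^sub>s f = (\<lambda>z. c * f z)"

definition supp :: "('b \<Rightarrow> 'k::zero) \<Rightarrow> 'b set" where
  "supp f = {b. f b \<noteq> 0}"

definition ind :: "'b \<Rightarrow> ('b \<Rightarrow> 'k::{zero,one})" where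
  "ind b = (\<lambda>z. if z = b then 1 else 0)"

definition bilin :: "('a \<Rightarrow> 'b \<Rightarrow> ('c \<Rightarrow> 'k::comm_ring_1)) \<Rightarrow> ('a \<Rightarrow> 'k) \<Rightarrow> ('b \<Rightarrow> 'k) \<Rightarrow> ('c \<Rightarrow> 'k)" where
  "bilin p X Y = (\<Sum>a\<in>supp X. \<Sum>b\<in>supp Y. (X a * Y b) \<cdot>\<^sub>s p a b)"

definition subspace :: "('b \<Rightarrow> 'k::field) set \<Rightarrow> bool" where
  "subspace V \<longleftrightarrow> 0 \<in> V \<and> (\<forall>f\<in>V. \<forall>g\<in>V. f + g \<in> V) \<and> (\<forall>c. \<forall>f\<in>V. c \<cdot>\<^sub>s f \<in> V)"

definition klinear_on :: "('a \<Rightarrow> 'k::field) set \<Rightarrow> (('a \<Rightarrow> 'k) \<Rightarrow> ('b \<Rightarrow> 'k)) \<Rightarrow> bool" where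
  "klinear_on V T \<longleftrightarrow> (\<forall>f\<in>V. \<forall>g\<in>V. T (f + g) = T f + T g) \<and> (\<forall>c. \<forall>f\<in>V. T (c \<cdot>\<^sub>s f) = c \<cdot>\<^sub>s T f)"

definition comm_algebra :: "('r \<Rightarrow> 'k::field) set \<Rightarrow> (('r \<Rightarrow> 'k) \<Rightarrow> ('r \<Rightarrow> 'k) \<Rightarrow> ('r \<Rightarrow> 'k)) \<Rightarrow> ('r \<Rightarrow> 'k) \<Rightarrow> bool" where
  "comm_algebra R mul one \<longleftrightarrow> subspace R \<and> one \<in> R \<and>
     (\<forall>f\<in>R. \<forall>g\<in>R. mul f g \<in> R) \<and>
     (\<forall>f\<in>R. \<forall>g\<in>R. \<forall>h\<in>R. mul (mul f g) h = mul f (mul g h)) \<and>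
     (\<forall>f\<in>R. \<forall>g\<in>R. mul f g = mul g f) \<and>
     (\<forall>f\<in>R. mul one f = f) \<and>
     (\<forall>f\<in>R. \<forall>g\<in>R. \<forall>h\<in>R. mul f (g + h) = mul f g + mul f h) \<and>
     (\<forall>c. \<forall>f\<in>R. \<forall>g\<in>R. mul (c \<cdot>\<^sub>s f) g = c \<cdot>\<^sub>s mul f g)"

definition is_module :: "('r \<Rightarrow> 'k::field) set \<Rightarrow> (('r \<Rightarrow> 'k) \<Rightarrow> ('r \<Rightarrow> 'k) \<Rightarrow> ('r \<Rightarrow> 'k)) \<Rightarrow> ('r \<Rightarrow> 'k)
     \<Rightarrow> ('l \<Rightarrow> 'k) set \<Rightarrow> (('r \<Rightarrow> 'k) \<Rightarrow> ('l \<Rightarrow> 'k) \<Rightarrow> ('l \<Rightarrow> 'k)) \<Rightarrow> bool" where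
  "is_module R mul one L act \<longleftrightarrow> subspace L \<and>
     (\<forall>f\<in>R. \<forall>X\<in>L. act f X \<in> L) \<and>
     (\<forall>f\<in>R. \<forall>X\<in>L. \<forall>Y\<in>L. act f (X + Y) = act f X + act f Y) \<and>
     (\<forall>f\<in>R. \<forall>g\<in>R. \<forall>X\<in>L. act (f + g) X = act f X + act g X) \<and>
     (\<forall>f\<in>R. \<forall>g\<in>R. \<forall>X\<in>L. act (mul f g) X = act f (act g X)) \<and>
     (\<forall>X\<in>L. act one X = X) \<and>
     (\<forall>c. \<forall>f\<in>R. \<forall>X\<in>L. act (c \<cdot>\<^sub>s f) X = c \<cdot>\<^sub>s act f X)"

definition is_derivation :: "('r \<Rightarrow> 'k::field) set \<Rightarrow> (('r \<Rightarrow> 'k) \<Rightarrow> ('r \<Rightarrow> 'k) \<Rightarrow> ('r \<Rightarrow> 'k))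
     \<Rightarrow> (('r \<Rightarrow> 'k) \<Rightarrow> ('r \<Rightarrow> 'k)) \<Rightarrow> bool" where
  "is_derivation R mul D \<longleftrightarrow> (\<forall>f\<in>R. D f \<in> R) \<and> klinear_on R D \<and>
     (\<forall>f\<in>R. \<forall>g\<in>R. D (mul f g) = mul (D f) g + mul f (D g))"

definition pre_lie_rinehart ::
  "('r \<Rightarrow> 'k::field) set \<Rightarrow> (('r \<Rightarrow> 'k) \<Rightarrow> ('r \<Rightarrow> 'k) \<Rightarrow> ('r \<Rightarrow> 'k)) \<Rightarrow> ('r \<Rightarrow> 'k)
   \<Rightarrow> ('l \<Rightarrow> 'k) set \<Rightarrow> (('r \<Rightarrow> 'k) \<Rightarrow> ('l \<Rightarrow> 'k) \<Rightarrow> ('l \<Rightarrow> 'k))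
   \<Rightarrow> (('l \<Rightarrow> 'k) \<Rightarrow> ('r \<Rightarrow> 'k) \<Rightarrow> ('r \<Rightarrow> 'k))
   \<Rightarrow> (('l \<Rightarrow> 'k) \<Rightarrow> ('l \<Rightarrow> 'k) \<Rightarrow> ('l \<Rightarrow> 'k)) \<Rightarrow> bool" where
  "pre_lie_rinehart R mul one L act rho nabla \<longleftrightarrow>
     (let br = (\<lambda>X Y. nabla X Y - nabla Y X) in
     \<comment> \<open>setting: R unital commutative K-algebra, L an R-module\<close>
     comm_algebra R mul one \<and> is_module R mul one L act \<and>
     \<comment> \<open>rho : L -> Der_K(R,R), R-linear\<close>
     (\<forall>X\<in>L. is_derivation R mul (rho X)) \<and>
     (\<forall>X\<in>L. \<forall>Y\<in>L. \<forall>f\<in>R. rho (X + Y) f = rho X f + rho Y f) \<and>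
     (\<forall>g\<in>R. \<forall>X\<in>L. \<forall>f\<in>R. rho (act g X) f = mul g (rho X f)) \<and>
     \<comment> \<open>nabla : L -> End_K(L)\<close>
     (\<forall>X\<in>L. (\<forall>Y\<in>L. nabla X Y \<in> L) \<and> klinear_on L (nabla X)) \<and>
     \<comment> \<open>(L, [-,-]) is a Lie algebra over K\<close>
     (\<forall>X\<in>L. \<forall>Y\<in>L. br X Y \<in> L) \<and>
     (\<forall>Z\<in>L. klinear_on L (\<lambda>X. br X Z) \<and> klinear_on L (br Z)) \<and>
     (\<forall>X\<in>L. br X X = 0) \<and>
     (\<forall>X\<in>L. \<forall>Y\<in>L. \<forall>Z\<in>L. br X (br Y Z) + br Y (br Z X) + br Z (br X Y) = 0) \<and>
     \<comment> \<open>rho is a Lie algebra homomorphism (into Der_K(R,R) with the commutator bracket)\<close>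
     (\<forall>c. \<forall>X\<in>L. \<forall>f\<in>R. rho (c \<cdot>\<^sub>s X) f = c \<cdot>\<^sub>s rho X f) \<and>
     (\<forall>X\<in>L. \<forall>Y\<in>L. \<forall>f\<in>R. rho (br X Y) f = rho X (rho Y f) - rho Y (rho X f)) \<and>
     \<comment> \<open>Leibniz rule\<close>
     (\<forall>f\<in>R. \<forall>X\<in>L. \<forall>Y\<in>L. br X (act f Y) = act (rho X f) Y + act f (br X Y)) \<and>
     \<comment> \<open>pre-Lie identity\<close>
     (\<forall>X\<in>L. \<forall>Y\<in>L. \<forall>Z\<in>L.
        nabla X (nabla Y Z) - nabla (nabla X Y) Z = nabla Y (nabla X Z) - nabla (nabla Y X) Z))"

text \<open>Variables x^a_j are pairs (a, j) with a a decoration and j an integer index; only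
  indices j >= -1 are admissible.  Monomials are finite multisets of variables
  (multiplicity = exponent).  Elements of the polynomial algebra are finitely supported
  coefficient functions on monomials.\<close>

type_synonym 'c mon = "('c \<times> int) multiset"

definition valid_mon :: "'c mon \<Rightarrow> bool" where
  "valid_mon m \<longleftrightarrow> (\<forall>v\<in>#m. snd v \<ge> -1)"

definition wt :: "'c mon \<Rightarrow> int" where
  "wt m = sum_mset (image_mset snd m)"

definition M0_mons :: "'c mon set" where
  "M0_mons = {m. valid_mon m \<and> wt m = 0 \<and> m \<noteq> {#}}"

definition Mm1_mons :: "'c mon set" where
  "Mm1_mons = {m. valid_mon m \<and> wt m = -1}"

definition shift :: "'c \<times> int \<Rightarrow> 'c \<times> int" where
  "shift v = (fst v, snd v + 1)"

text \<open>The monomials occurring in x^k \<rhd> x^p = x^k * \<partial> x^p: for each variable v of p (with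
  multiplicity count p v as coefficient), k + (p - v) + shift v.\<close>
definition dterm :: "'c mon \<Rightarrow> 'c mon \<Rightarrow> ('c \<times> int) \<Rightarrow> 'c mon" where
  "dterm k p v = k + (p - {#v#}) + {#shift v#}"

text \<open>Symmetric algebra S(M_0): basis = finite multisets of M_0-monomials (odot = multiset sum).
  L = S(M_0) (x) M_{-1}: basis = pairs (y, k).\<close>

definition R_car :: "('c mon multiset \<Rightarrow> 'k::field) set" where
  "R_car = {f. finite (supp f) \<and> (\<forall>y\<in>supp f. \<forall>p\<in>#y. p \<in> M0_mons)}"

definition L_car :: "('c mon multiset \<times> 'c mon \<Rightarrow> 'k::field) set" where
  "L_car = {X. finite (supp X) \<and> (\<forall>(y,k)\<in>supp X. (\<forall>p\<in>#y. p \<in> M0_mons) \<and> k \<in> Mm1_mons)}"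

definition R_mult :: "('c mon multiset \<Rightarrow> 'k::field) \<Rightarrow> ('c mon multiset \<Rightarrow> 'k) \<Rightarrow> ('c mon multiset \<Rightarrow> 'k)" where
  "R_mult = bilin (\<lambda>y y'. ind (y + y'))"

definition R_one :: "'c mon multiset \<Rightarrow> 'k::field" where
  "R_one = ind {#}"

definition L_smul :: "('c mon multiset \<Rightarrow> 'k::field) \<Rightarrow> ('c mon multiset \<times> 'c mon \<Rightarrow> 'k)
     \<Rightarrow> ('c mon multiset \<times> 'c mon \<Rightarrow> 'k)" where
  "L_smul = bilin (\<lambda>y' (y, k). ind (y' + y, k))"

text \<open>x^k \<rhd> y for a multiaroma basis element y (product of M_0 monomials), then multiplied by y1:
  y1 odot (x^k \<rhd> y) as a basis expansion.\<close>
definition tri_aroma :: "'c mon multiset \<Rightarrow> 'c mon \<Rightarrow> 'c mon multiset \<Rightarrow> ('c mon multiset \<Rightarrow> 'k::field)" where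
  "tri_aroma y1 k y = (\<Sum>p\<in>set_mset y. of_nat (count y p) \<cdot>\<^sub>s
      (\<Sum>v\<in>set_mset p. of_nat (count p v) \<cdot>\<^sub>s ind (y1 + (y - {#p#}) + {#dterm k p v#})))"

text \<open>Basis product (y1 odot x^k1) \<rhd> (y2 odot x^k2).\<close>
definition tri_basis :: "'c mon multiset \<times> 'c mon \<Rightarrow> 'c mon multiset \<times> 'c mon
     \<Rightarrow> ('c mon multiset \<times> 'c mon \<Rightarrow> 'k::field)" where
  "tri_basis b1 b2 = (case b1 of (y1, k1) \<Rightarrow> case b2 of (y2, k2) \<Rightarrow>
      (\<Sum>p\<in>set_mset y2. of_nat (count y2 p) \<cdot>\<^sub>s
         (\<Sum>v\<in>set_mset p. of_nat (count p v) \<cdot>\<^sub>s ind (y1 + (y2 - {#p#}) + {#dterm k1 p v#}, k2)))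
    + (\<Sum>v\<in>set_mset k2. of_nat (count k2 v) \<cdot>\<^sub>s ind (y1 + y2, dterm k1 k2 v)))"

definition L_nabla :: "('c mon multiset \<times> 'c mon \<Rightarrow> 'k::field) \<Rightarrow> ('c mon multiset \<times> 'c mon \<Rightarrow> 'k)
     \<Rightarrow> ('c mon multiset \<times> 'c mon \<Rightarrow> 'k)" where
  "L_nabla = bilin tri_basis"

definition L_rho :: "('c mon multiset \<times> 'c mon \<Rightarrow> 'k::field) \<Rightarrow> ('c mon multiset \<Rightarrow> 'k)
     \<Rightarrow> ('c mon multiset \<Rightarrow> 'k)" where
  "L_rho = bilin (\<lambda>(y1, k) y. tri_aroma y1 k y)"

end

theory Submission
  imports Defs
begin


abbreviation fs :: "('b \<Rightarrow> 'k::comm_ring_1) \<Rightarrow> bool" where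
  "fs f \<equiv> finite (supp f)"

lemma sum_fun_apply: "(sum g A) z = (\<Sum>a\<in>A. g a z)"
  by (induction A rule: infinite_finite_induct) auto

lemma sum_mset_fun_apply: "(\<Sum>x\<in>#M. g x) z = (\<Sum>x\<in>#M. g x z)"
  by (induction M) auto

lemma smult_apply: "(c \<cdot>\<^sub>s f) z = c * f z"
  by (simp add: smult_def)

lemma smult_zero_left[simp]: "0 \<cdot>\<^sub>s F = (0::_ \<Rightarrow> 'k::comm_ring_1)"
  by (simp add: smult_def fun_eq_iff)
lemma smult_zero_right[simp]: "c \<cdot>\<^sub>s 0 = (0::_ \<Rightarrow> 'k::comm_ring_1)"
  by (simp add: smult_def fun_eq_iff)

lemma supp_iff[simp]: "x \<in> supp f \<longleftrightarrow> f x \<noteq> 0"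
  by (simp add: supp_def)

lemma supp_add: "supp ((f::_\<Rightarrow>'k::comm_ring_1) + g) \<subseteq> supp f \<union> supp g"
  by auto
lemma supp_diff: "supp ((f::_\<Rightarrow>'k::comm_ring_1) - g) \<subseteq> supp f \<union> supp g"
  by auto
lemma supp_smult: "supp (c \<cdot>\<^sub>s (f::_\<Rightarrow>'k::comm_ring_1)) \<subseteq> supp f"
  by (auto simp: smult_apply)
lemma supp_zero[simp]: "supp 0 = {}"
  by auto
lemma supp_ind[simp]: "supp (ind b :: _ \<Rightarrow> 'k::comm_ring_1) = {b}"
  by (auto simp: ind_def supp_def split: if_splits)

lemma fs_add[simp]: "fs f \<Longrightarrow> fs g \<Longrightarrow> fs (f + g)"
  by (meson finite_UnI finite_subset supp_add)
lemma fs_diff[simp]: "fs f \<Longrightarrow> fs g \<Longrightarrow> fs (f - g)"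
  by (meson finite_UnI finite_subset supp_diff)
lemma fs_smult[simp]: "fs f \<Longrightarrow> fs (c \<cdot>\<^sub>s f)"
  by (meson finite_subset supp_smult)
lemma fs_uminus[simp]: "fs f \<Longrightarrow> fs (- f)"
  by (simp add: supp_def)
lemma fs_sum_mset[simp]: "(\<And>x. x \<in># M \<Longrightarrow> fs (g x)) \<Longrightarrow> fs (\<Sum>x\<in>#M. g x)"
  by (induction M) auto
lemma fs_sum[simp]: "(\<And>x. x \<in> A \<Longrightarrow> fs (g x)) \<Longrightarrow> fs (\<Sum>x\<in>A. g x)"
  by (induction A rule: infinite_finite_induct) auto

definition lin :: "('a \<Rightarrow> ('b \<Rightarrow> 'k::comm_ring_1)) \<Rightarrow> ('a \<Rightarrow> 'k) \<Rightarrow> ('b \<Rightarrow> 'k)" where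
  "lin f X = (\<Sum>a\<in>supp X. X a \<cdot>\<^sub>s f a)"

lemma lin_apply: "lin f X z = (\<Sum>a\<in>supp X. X a * f a z)"
  by (simp add: lin_def sum_fun_apply smult_apply)

lemma lin_superset: assumes "finite A" "supp X \<subseteq> A"
  shows "lin f X z = (\<Sum>a\<in>A. X a * f a z)"
  unfolding lin_apply
  by (rule sum.mono_neutral_left) (use assms in auto)

lemma lin_add: assumes "fs X" "fs Y" shows "lin f (X + Y) = lin f X + lin f Y"
proof
  fix z
  let ?A = "supp X \<union> supp Y"
  have "lin f (X + Y) z = (\<Sum>a\<in>?A. (X + Y) a * f a z)"
    by (rule lin_superset) (use assms supp_add in auto)
  also have "\<dots> = (\<Sum>a\<in>?A. X a * f a z) + (\<Sum>a\<in>?A. Y a * f a z)"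
    by (simp add: ring_distribs sum.distrib)
  also have "\<dots> = lin f X z + lin f Y z"
    using assms by (simp add: lin_superset[of ?A])
  finally show "lin f (X + Y) z = (lin f X + lin f Y) z" by simp
qed

lemma lin_diff: assumes "fs X" "fs Y" shows "lin f (X - Y) = lin f X - lin f Y"
proof
  fix z
  let ?A = "supp X \<union> supp Y"
  have "lin f (X - Y) z = (\<Sum>a\<in>?A. (X - Y) a * f a z)"
    by (rule lin_superset) (use assms supp_diff in auto)
  also have "\<dots> = (\<Sum>a\<in>?A. X a * f a z) - (\<Sum>a\<in>?A. Y a * f a z)"
    by (simp add: left_diff_distrib sum_subtractf)
  also have "\<dots> = lin f X z - lin f Y z"
    using assms by (simp add: lin_superset[of ?A])
  finally show "lin f (X - Y) z = (lin f X - lin f Y) z" by simp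
qed

lemma lin_smult: assumes "fs X" shows "lin f (c \<cdot>\<^sub>s X) = c \<cdot>\<^sub>s lin f X"
proof
  fix z
  have "lin f (c \<cdot>\<^sub>s X) z = (\<Sum>a\<in>supp X. (c \<cdot>\<^sub>s X) a * f a z)"
    by (rule lin_superset) (use assms supp_smult in \<open>auto simp: smult_apply\<close>)
  also have "\<dots> = c * lin f X z"
    by (simp add: lin_apply smult_apply sum_distrib_left mult.assoc)
  finally show "lin f (c \<cdot>\<^sub>s X) z = (c \<cdot>\<^sub>s lin f X) z" by (simp add: smult_apply)
qed

lemma lin_zero[simp]: "lin f 0 = 0"
  by (simp add: lin_def)

lemma lin_ind[simp]: "lin f (ind b) = f b"
  unfolding lin_def supp_ind by (simp add: ind_def smult_def)

lemma lin_fadd: "lin (\<lambda>a. f a + g a) X = lin f X + lin g X"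
  by (rule ext) (simp add: lin_apply ring_distribs sum.distrib)
lemma lin_fdiff: "lin (\<lambda>a. f a - g a) X = lin f X - lin g X"
  by (rule ext) (simp add: lin_apply right_diff_distrib sum_subtractf)
lemma lin_fsmult: "lin (\<lambda>a. c \<cdot>\<^sub>s f a) X = c \<cdot>\<^sub>s lin f X"
  by (rule ext) (simp add: lin_apply smult_apply sum_distrib_left ac_simps)
lemma lin_fzero[simp]: "lin (\<lambda>a. 0) X = 0"
  by (rule ext) (simp add: lin_apply)
lemma lin_cong: "(\<And>a. a \<in> supp X \<Longrightarrow> f a = g a) \<Longrightarrow> lin f X = lin g X"
  by (simp add: lin_def)

lemma supp_lin: "supp (lin f X) \<subseteq> (\<Union>a\<in>supp X. supp (f a))"
proof
  fix z assume "z \<in> supp (lin f X)"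
  then have "(\<Sum>a\<in>supp X. X a * f a z) \<noteq> 0" by (simp add: lin_apply)
  then obtain a where "a \<in> supp X" "X a * f a z \<noteq> 0"
    by (meson sum.neutral)
  then have "f a z \<noteq> 0" by auto
  then show "z \<in> (\<Union>a\<in>supp X. supp (f a))" using \<open>a \<in> supp X\<close> by auto
qed

lemma fs_lin[simp]: "fs X \<Longrightarrow> (\<And>a. fs (f a)) \<Longrightarrow> fs (lin f X)"
  by (rule finite_subset[OF supp_lin]) auto

lemma lin_sum_mset: "(\<And>x. x \<in># M \<Longrightarrow> fs (g x)) \<Longrightarrow> lin f (\<Sum>x\<in>#M. g x) = (\<Sum>x\<in>#M. lin f (g x))"
  by (induction M) (auto simp: lin_add)

lemma lin_id: "fs X \<Longrightarrow> lin ind X = X"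
proof
  fix z assume "fs X"
  have "lin ind X z = (\<Sum>a\<in>supp X. if z = a then X a else 0)"
    by (auto simp: lin_apply ind_def intro!: sum.cong)
  also have "\<dots> = X z" using \<open>fs X\<close> by (simp add: sum.delta')
  finally show "lin ind X z = X z" .
qed

lemma lin_lin: assumes "fs X" "\<And>a. fs (f a)"
  shows "lin g (lin f X) = lin (\<lambda>a. lin g (f a)) X"
proof
  fix z
  let ?S = "\<Union>a\<in>supp X. supp (f a)"
  have fin: "finite ?S" using assms by auto
  have "lin g (lin f X) z = (\<Sum>b\<in>?S. lin f X b * g b z)"
    by (rule lin_superset[OF fin supp_lin])
  also have "\<dots> = (\<Sum>b\<in>?S. \<Sum>a\<in>supp X. X a * f a b * g b z)"
    by (simp add: lin_apply sum_distrib_right)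
  also have "\<dots> = (\<Sum>a\<in>supp X. X a * (\<Sum>b\<in>?S. f a b * g b z))"
    by (subst sum.swap) (simp add: sum_distrib_left mult.assoc)
  also have "\<dots> = (\<Sum>a\<in>supp X. X a * lin g (f a) z)"
    by (rule sum.cong[OF refl]) (subst lin_superset[OF fin], auto)
  also have "\<dots> = lin (\<lambda>a. lin g (f a)) X z" by (simp add: lin_apply)
  finally show "lin g (lin f X) z = lin (\<lambda>a. lin g (f a)) X z" .
qed

lemma bilin_lin: "bilin p X Y = lin (\<lambda>a. lin (p a) Y) X"
  by (rule ext) (simp add: bilin_def lin_apply sum_fun_apply smult_apply sum_distrib_left mult.assoc)

definition linfs :: "(('a \<Rightarrow> 'k::comm_ring_1) \<Rightarrow> ('b \<Rightarrow> 'k)) \<Rightarrow> bool" where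
  "linfs T \<longleftrightarrow> (\<forall>X Y. fs X \<longrightarrow> fs Y \<longrightarrow> T (X + Y) = T X + T Y) \<and> (\<forall>c X. fs X \<longrightarrow> T (c \<cdot>\<^sub>s X) = c \<cdot>\<^sub>s T X)"

lemma linfsD: "linfs T \<Longrightarrow> fs X \<Longrightarrow> fs Y \<Longrightarrow> T (X + Y) = T X + T Y"
  "linfs T \<Longrightarrow> fs X \<Longrightarrow> T (c \<cdot>\<^sub>s X) = c \<cdot>\<^sub>s T X"
  by (auto simp: linfs_def)

lemma linfs_expand: assumes "linfs T" "fs X" shows "T X = lin (\<lambda>b. T (ind b)) X"
proof -
  have zero: "T 0 = 0"
    using linfsD(2)[OF assms(1), of 0 0] by simp
  have sumT: "T (\<Sum>a\<in>A. X a \<cdot>\<^sub>s ind a) = (\<Sum>a\<in>A. X a \<cdot>\<^sub>s T (ind a))" if "finite A" for A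
    using that
  proof (induction A rule: finite_induct)
    case empty then show ?case by (simp only: sum.empty zero)
  next
    case (insert x F)
    have "T (\<Sum>a\<in>insert x F. X a \<cdot>\<^sub>s ind a) = T (X x \<cdot>\<^sub>s ind x + (\<Sum>a\<in>F. X a \<cdot>\<^sub>s ind a))"
      using insert by simp
    also have "\<dots> = X x \<cdot>\<^sub>s T (ind x) + T (\<Sum>a\<in>F. X a \<cdot>\<^sub>s ind a)"
    proof -
      have "T (X x \<cdot>\<^sub>s ind x + (\<Sum>a\<in>F. X a \<cdot>\<^sub>s ind a)) = T (X x \<cdot>\<^sub>s ind x) + T (\<Sum>a\<in>F. X a \<cdot>\<^sub>s ind a)"
        by (rule linfsD(1)[OF assms(1)]) (use insert in auto)
      also have "T (X x \<cdot>\<^sub>s ind x) = X x \<cdot>\<^sub>s T (ind x)"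
        by (rule linfsD(2)[OF assms(1)]) auto
      finally show ?thesis .
    qed
    finally show ?case by (simp only: sum.insert[OF insert.hyps] insert.IH)
  qed
  have "T (lin ind X) = lin (\<lambda>b. T (ind b)) X"
    using assms(2) sumT by (simp add: lin_def)
  then show ?thesis using lin_id[OF assms(2)] by simp
qed

lemma linfs_ext: assumes "linfs T" "linfs S" "\<And>b. T (ind b) = S (ind b)" "fs X"
  shows "T X = S X"
  using linfs_expand[OF assms(1,4)] linfs_expand[OF assms(2,4)] assms(3) by simp

lemma linfs_lin[intro]: "linfs (lin f)"
  by (simp add: linfs_def lin_add lin_smult)

lemma linfs_add[intro]: "linfs T \<Longrightarrow> linfs S \<Longrightarrow> linfs (\<lambda>X. T X + S X)"
  by (simp add: linfs_def fun_eq_iff ring_distribs smult_apply)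
lemma linfs_diff[intro]: "linfs T \<Longrightarrow> linfs S \<Longrightarrow> linfs (\<lambda>X. T X - S X)"
  by (simp add: linfs_def fun_eq_iff right_diff_distrib smult_apply)
lemma linfs_comp[intro]: "linfs T \<Longrightarrow> linfs S \<Longrightarrow> (\<And>X. fs X \<Longrightarrow> fs (S X)) \<Longrightarrow> linfs (\<lambda>X. T (S X))"
  by (simp add: linfs_def)
lemma linfs_lin_arg[intro]: "(\<And>a. fs (f a)) \<Longrightarrow> linfs (\<lambda>X. lin (f X) Y) \<Longrightarrow> True"
  by simp



lemma sum_mset_count_k: "(\<Sum>p\<in>#y. g p) = (\<Sum>p\<in>set_mset y. of_nat (count y p) * (g p :: 'k::comm_ring_1))"
proof (induction y)
  case empty then show ?case by simp
next
  case (add x y)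
  show ?case
  proof (cases "x \<in># y")
    case True
    have "(\<Sum>p\<in>set_mset (add_mset x y). of_nat (count (add_mset x y) p) * g p)
        = (\<Sum>p\<in>set_mset y. of_nat (count y p) * g p + (if p = x then g p else 0))"
      using True by (intro sum.cong) (auto simp: ring_distribs)
    also have "\<dots> = (\<Sum>p\<in>set_mset y. of_nat (count y p) * g p) + g x"
      using True by (simp add: sum.distrib sum.delta')
    finally show ?thesis using add by simp
  next
    case False
    have "(\<Sum>p\<in>set_mset (add_mset x y). of_nat (count (add_mset x y) p) * g p)
        = g x + (\<Sum>p\<in>set_mset y. of_nat (count (add_mset x y) p) * g p)"
      using False by (simp add: sum.insert not_in_iff)
    also have "(\<Sum>p\<in>set_mset y. of_nat (count (add_mset x y) p) * g p) = (\<Sum>p\<in>set_mset y. of_nat (count y p) * g p)"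
      using False by (intro sum.cong) auto
    finally show ?thesis using add by simp
  qed
qed

lemma count_sum_conv: "(\<Sum>p\<in>set_mset y. of_nat (count y p) \<cdot>\<^sub>s f p) = (\<Sum>p\<in>#y. f p :: _ \<Rightarrow> 'k::comm_ring_1)"
  by (rule ext) (simp add: sum_fun_apply sum_mset_fun_apply smult_apply sum_mset_count_k[where g="\<lambda>p. f p _"])

lemma sum_mset_cong: "(\<And>x. x \<in># M \<Longrightarrow> f x = g x) \<Longrightarrow> (\<Sum>x\<in>#M. f x) = (\<Sum>x\<in>#M. g x)"
  by (metis image_mset_cong)

lemma sum_remove_plus:
  "(\<Sum>w\<in>#(A+B). F ((A + B) - {#w#}) w) = (\<Sum>w\<in>#A. F ((A - {#w#}) + B) w) + (\<Sum>w\<in>#B. F (A + (B - {#w#})) w)"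
proof -
  have "(\<Sum>w\<in>#A. F ((A + B) - {#w#}) w) = (\<Sum>w\<in>#A. F ((A - {#w#}) + B) w)"
    by (rule sum_mset_cong) (metis add.commute diff_union_single_conv)
  moreover have "(\<Sum>w\<in>#B. F ((A + B) - {#w#}) w) = (\<Sum>w\<in>#B. F (A + (B - {#w#})) w)"
    by (rule sum_mset_cong) (metis diff_union_single_conv)
  ultimately show ?thesis by simp
qed

lemma sum_remove_single: "(\<Sum>w\<in>#{#a#}. F ({#a#} - {#w#}) w) = F {#} a"
  by simp

lemma pull: "(\<Sum>i\<in>#A. \<Sum>j\<in>#f i. \<Sum>k\<in>#B. h i j k) = (\<Sum>k\<in>#B. \<Sum>i\<in>#A. \<Sum>j\<in>#f i. (h i j k :: 'a::comm_monoid_add))"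
proof -
  have "(\<Sum>i\<in>#A. \<Sum>j\<in>#f i. \<Sum>k\<in>#B. h i j k) = (\<Sum>i\<in>#A. \<Sum>k\<in>#B. \<Sum>j\<in>#f i. h i j k)"
    by (rule sum_mset_cong) (rule sum_mset.swap[of "\<lambda>j k. h _ j k" B])
  also have "\<dots> = (\<Sum>k\<in>#B. \<Sum>i\<in>#A. \<Sum>j\<in>#f i. h i j k)"
    by (rule sum_mset.swap[of "\<lambda>i k. \<Sum>j\<in>#f i. h i j k" B A])
  finally show ?thesis .
qed

lemma dsum_sym:
  "(\<Sum>p\<in>#y. \<Sum>s\<in>#(y - {#p#}). G (y - {#p#} - {#s#}) p s)
   = (\<Sum>p\<in>#y. \<Sum>s\<in>#(y - {#p#}). (G (y - {#p#} - {#s#}) s p :: 'a::comm_monoid_add))"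
proof (induction y arbitrary: G)
  case empty then show ?case by simp
next
  case (add x y)
  have split: "(\<Sum>p\<in>#add_mset x y. \<Sum>s\<in>#(add_mset x y - {#p#}). H (add_mset x y - {#p#} - {#s#}) p s)
     = (\<Sum>s\<in>#y. H (y - {#s#}) x s) + (\<Sum>p\<in>#y. H (y - {#p#}) p x)
       + (\<Sum>p\<in>#y. \<Sum>s\<in>#(y - {#p#}). H (add_mset x (y - {#p#} - {#s#})) p s)" for H :: "_ \<Rightarrow> _ \<Rightarrow> _ \<Rightarrow> 'a"
  proof -
    have "(\<Sum>p\<in>#y. \<Sum>s\<in>#(add_mset x y - {#p#}). H (add_mset x y - {#p#} - {#s#}) p s)
        = (\<Sum>p\<in>#y. H (y - {#p#}) p x + (\<Sum>s\<in>#(y - {#p#}). H (add_mset x (y - {#p#} - {#s#})) p s))"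
    proof (rule sum_mset_cong)
      fix p assume p: "p \<in># y"
      have "(\<Sum>s\<in>#(add_mset x y - {#p#}). H (add_mset x y - {#p#} - {#s#}) p s)
          = (\<Sum>s\<in>#add_mset x (y - {#p#}). H (add_mset x (y - {#p#}) - {#s#}) p s)"
        using p by simp
      also have "\<dots> = H (y - {#p#}) p x + (\<Sum>s\<in>#(y - {#p#}). H (add_mset x (y - {#p#}) - {#s#}) p s)"
        by simp
      also have "(\<Sum>s\<in>#(y - {#p#}). H (add_mset x (y - {#p#}) - {#s#}) p s)
          = (\<Sum>s\<in>#(y - {#p#}). H (add_mset x (y - {#p#} - {#s#})) p s)"
        by (rule sum_mset_cong) simp
      finally show "(\<Sum>s\<in>#(add_mset x y - {#p#}). H (add_mset x y - {#p#} - {#s#}) p s)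
          = H (y - {#p#}) p x + (\<Sum>s\<in>#(y - {#p#}). H (add_mset x (y - {#p#} - {#s#})) p s)" .
    qed
    then show ?thesis by (simp add: sum_mset.distrib add_ac)
  qed
  have "(\<Sum>p\<in>#add_mset x y. \<Sum>s\<in>#(add_mset x y - {#p#}). G (add_mset x y - {#p#} - {#s#}) p s)
     = (\<Sum>s\<in>#y. G (y - {#s#}) x s) + (\<Sum>p\<in>#y. G (y - {#p#}) p x)
       + (\<Sum>p\<in>#y. \<Sum>s\<in>#(y - {#p#}). G (add_mset x (y - {#p#} - {#s#})) p s)"
    by (rule split)
  also have "(\<Sum>p\<in>#y. \<Sum>s\<in>#(y - {#p#}). G (add_mset x (y - {#p#} - {#s#})) p s)
     = (\<Sum>p\<in>#y. \<Sum>s\<in>#(y - {#p#}). G (add_mset x (y - {#p#} - {#s#})) s p)"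
    by (rule add.IH)
  also have "(\<Sum>s\<in>#y. G (y - {#s#}) x s) + (\<Sum>p\<in>#y. G (y - {#p#}) p x)
     = (\<Sum>s\<in>#y. G (y - {#s#}) s x) + (\<Sum>p\<in>#y. G (y - {#p#}) x p)"
    by (rule add.commute)
  also have "(\<Sum>s\<in>#y. G (y - {#s#}) s x) + (\<Sum>p\<in>#y. G (y - {#p#}) x p)
       + (\<Sum>p\<in>#y. \<Sum>s\<in>#(y - {#p#}). G (add_mset x (y - {#p#} - {#s#})) s p)
     = (\<Sum>p\<in>#add_mset x y. \<Sum>s\<in>#(add_mset x y - {#p#}). G (add_mset x y - {#p#} - {#s#}) s p)"
    by (rule split[of "\<lambda>m p s. G m s p", symmetric])
  finally show ?case .
qed



declare subset_mset.add_diff_assoc[simp del] subset_mset.add_diff_assoc2[simp del] diff_diff_add_mset[simp del]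

definition DA :: "'c mon multiset \<Rightarrow> 'c mon \<Rightarrow> 'c mon multiset \<Rightarrow> 'c mon \<Rightarrow> ('c mon multiset \<times> 'c mon \<Rightarrow> 'k::field)" where
  "DA y1 k1 y k = (\<Sum>p\<in>#y. \<Sum>v\<in>#p. ind (add_mset (dterm k1 p v) (y1 + (y - {#p#})), k))"

definition DK :: "'c mon multiset \<Rightarrow> 'c mon \<Rightarrow> 'c mon multiset \<Rightarrow> 'c mon \<Rightarrow> ('c mon multiset \<times> 'c mon \<Rightarrow> 'k::field)" where
  "DK y1 k1 y k = (\<Sum>v\<in>#k. ind (y1 + y, dterm k1 k v))"

definition AR :: "'c mon multiset \<Rightarrow> 'c mon \<Rightarrow> 'c mon multiset \<Rightarrow> ('c mon multiset \<Rightarrow> 'k::field)" where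
  "AR y1 k y = (\<Sum>p\<in>#y. \<Sum>v\<in>#p. ind (add_mset (dterm k p v) (y1 + (y - {#p#}))))"

lemma TB_eq: "tri_basis (y1, k1) (y, k) = DA y1 k1 y k + DK y1 k1 y k"
  by (simp add: tri_basis_def count_sum_conv DA_def DK_def)

lemma TA_eq: "tri_aroma y1 k y = AR y1 k y"
  by (simp add: tri_aroma_def count_sum_conv AR_def)

lemma dterm_eq: "dterm k p v = add_mset (shift v) (k + (p - {#v#}))"
  by (simp add: dterm_def)

lemma DA_empty[simp]: "DA y1 k1 {#} k = 0"
  by (simp add: DA_def)

lemma DA_add_mset: "(DA y1 k1 (add_mset q A) k :: _ \<Rightarrow> 'k::field) =
   (\<Sum>w\<in>#q. ind (add_mset (dterm k1 q w) (y1 + A), k)) + DA (add_mset q y1) k1 A k"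
proof -
  have "(\<Sum>p\<in>#A. \<Sum>v\<in>#p. ind (add_mset (dterm k1 p v) (y1 + (add_mset q A - {#p#})), k))
      = (\<Sum>p\<in>#A. \<Sum>v\<in>#p. ind (add_mset (dterm k1 p v) (add_mset q y1 + (A - {#p#})), k) :: _ \<Rightarrow> 'k)"
    by (rule sum_mset_cong) simp
  then show ?thesis by (simp add: DA_def)
qed

lemma mdiff1: "w \<in># A \<Longrightarrow> A + B - {#w#} = (A - {#w#}) + B"
  by (metis add.commute diff_union_single_conv)
lemma mdiff2: "w \<in># B \<Longrightarrow> A + B - {#w#} = A + (B - {#w#})"
  by (metis diff_union_single_conv)

lemma DA_plus: "(DA y1 k1 (A + B) k :: _ \<Rightarrow> 'k::field) = DA (y1 + B) k1 A k + DA (y1 + A) k1 B k"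
proof -
  have "(\<Sum>p\<in>#A. \<Sum>v\<in>#p. ind (add_mset (dterm k1 p v) (y1 + (A + B - {#p#})), k))
      = (DA (y1 + B) k1 A k :: _ \<Rightarrow> 'k)"
    unfolding DA_def by (rule sum_mset_cong) (simp add: mdiff1 add_ac)
  moreover have "(\<Sum>p\<in>#B. \<Sum>v\<in>#p. ind (add_mset (dterm k1 p v) (y1 + (A + B - {#p#})), k))
      = (DA (y1 + A) k1 B k :: _ \<Rightarrow> 'k)"
    unfolding DA_def by (rule sum_mset_cong) (simp add: mdiff2 add_ac)
  ultimately show ?thesis by (simp add: DA_def)
qed

lemma dd_split: "(\<Sum>w\<in>#dterm k2 p v. F (dterm k1 (dterm k2 p v) w)) =
   (\<Sum>w\<in>#k2. F (dterm (dterm k1 k2 w) p v))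
 + (\<Sum>w\<in>#(p - {#v#}). F (add_mset (shift v) (add_mset (shift w) (k1 + k2 + (p - {#v#} - {#w#})))))
 + (F (add_mset (shift (shift v)) (k1 + k2 + (p - {#v#}))) :: 'a::comm_monoid_add)"
proof -
  have a: "(\<Sum>w\<in>#k2. F (dterm k1 (dterm k2 p v) w)) = (\<Sum>w\<in>#k2. F (dterm (dterm k1 k2 w) p v))"
    by (rule sum_mset_cong) (simp add: dterm_eq mdiff1 mdiff2 add_ac add_mset_commute)
  have b: "(\<Sum>w\<in>#(p - {#v#}). F (dterm k1 (dterm k2 p v) w)) =
      (\<Sum>w\<in>#(p - {#v#}). F (add_mset (shift v) (add_mset (shift w) (k1 + k2 + (p - {#v#} - {#w#})))))"
    by (rule sum_mset_cong) (simp add: dterm_eq mdiff1 mdiff2 add_ac add_mset_commute)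
  have c: "F (dterm k1 (dterm k2 p v) (shift v)) = F (add_mset (shift (shift v)) (k1 + k2 + (p - {#v#})))"
    by (simp add: dterm_eq add_ac)
  show ?thesis
    by (simp add: dterm_eq[of k2 p v] a[unfolded dterm_eq[of k2 p v]] b[unfolded dterm_eq[of k2 p v]] c[unfolded dterm_eq[of k2 p v]] add_ac)
qed



lemma fs_DA[simp]: "fs (DA y1 k1 y k :: _ \<Rightarrow> 'k::field)" by (simp add: DA_def)
lemma fs_DK[simp]: "fs (DK y1 k1 y k :: _ \<Rightarrow> 'k::field)" by (simp add: DK_def)
lemma fs_TB[simp]: "fs (tri_basis a b :: _ \<Rightarrow> 'k::field)" by (cases a; cases b) (simp add: TB_eq)

lemma lin_DA: "lin f (DA y1 k1 y k) = (\<Sum>p\<in>#y. \<Sum>v\<in>#p. f (add_mset (dterm k1 p v) (y1 + (y - {#p#})), k))"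
  by (simp add: DA_def lin_sum_mset)
lemma lin_DK: "lin f (DK y1 k1 y k) = (\<Sum>v\<in>#k. f (y1 + y, dterm k1 k v))"
  by (simp add: DK_def lin_sum_mset)
lemma lin_TB: "lin f (tri_basis (y1,k1) (y,k)) = (\<Sum>p\<in>#y. \<Sum>v\<in>#p. f (add_mset (dterm k1 p v) (y1 + (y - {#p#})), k)) + (\<Sum>v\<in>#k. f (y1 + y, dterm k1 k v))"
  by (simp add: TB_eq lin_add lin_DA lin_DK)


lemma m1: "(\<Sum>p\<in>#y3. \<Sum>v\<in>#p. DA (add_mset (dterm k2 p v) (y1 + (y3 - {#p#}))) k1 y2 k3)
  = (\<Sum>s\<in>#y2. \<Sum>w\<in>#s. DA (add_mset (dterm k1 s w) (y1 + (y2 - {#s#}))) k2 y3 k3 :: _ \<Rightarrow> 'k::field)"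
proof -
  have "(\<Sum>p\<in>#y3. \<Sum>v\<in>#p. DA (add_mset (dterm k2 p v) (y1 + (y3 - {#p#}))) k1 y2 k3 :: _ \<Rightarrow> 'k)
     = (\<Sum>p\<in>#y3. \<Sum>v\<in>#p. \<Sum>s\<in>#y2. \<Sum>w\<in>#s. ind (add_mset (dterm k1 s w) (add_mset (dterm k2 p v) (y1 + (y3 - {#p#})) + (y2 - {#s#})), k3))"
    by (simp add: DA_def)
  also have "\<dots> = (\<Sum>s\<in>#y2. \<Sum>p\<in>#y3. \<Sum>v\<in>#p. \<Sum>w\<in>#s. ind (add_mset (dterm k1 s w) (add_mset (dterm k2 p v) (y1 + (y3 - {#p#})) + (y2 - {#s#})), k3))"
    by (rule pull)
  also have "\<dots> = (\<Sum>s\<in>#y2. \<Sum>w\<in>#s. \<Sum>p\<in>#y3. \<Sum>v\<in>#p. ind (add_mset (dterm k1 s w) (add_mset (dterm k2 p v) (y1 + (y3 - {#p#})) + (y2 - {#s#})), k3))"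
    by (rule sum_mset_cong) (rule pull)
  also have "\<dots> = (\<Sum>s\<in>#y2. \<Sum>w\<in>#s. DA (add_mset (dterm k1 s w) (y1 + (y2 - {#s#}))) k2 y3 k3)"
    by (simp add: DA_def add_ac add_mset_commute)
  finally show ?thesis .
qed

lemma m2: "(\<Sum>v\<in>#k3. DA (y1 + y3) k1 y2 (dterm k2 k3 v))
  = (\<Sum>s\<in>#y2. \<Sum>w\<in>#s. DK (add_mset (dterm k1 s w) (y1 + (y2 - {#s#}))) k2 y3 k3 :: _ \<Rightarrow> 'k::field)"
proof -
  have "(\<Sum>s\<in>#y2. \<Sum>w\<in>#s. DK (add_mset (dterm k1 s w) (y1 + (y2 - {#s#}))) k2 y3 k3 :: _ \<Rightarrow> 'k)
     = (\<Sum>s\<in>#y2. \<Sum>w\<in>#s. \<Sum>v\<in>#k3. ind (add_mset (dterm k1 s w) (y1 + (y2 - {#s#})) + y3, dterm k2 k3 v))"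
    by (simp add: DK_def)
  also have "\<dots> = (\<Sum>v\<in>#k3. \<Sum>s\<in>#y2. \<Sum>w\<in>#s. ind (add_mset (dterm k1 s w) (y1 + (y2 - {#s#})) + y3, dterm k2 k3 v))"
    by (rule pull)
  also have "\<dots> = (\<Sum>v\<in>#k3. DA (y1 + y3) k1 y2 (dterm k2 k3 v))"
    by (simp add: DA_def add_ac)
  finally show ?thesis by simp
qed

lemma m3: "(\<Sum>p\<in>#y3. \<Sum>v\<in>#p. \<Sum>w\<in>#dterm k2 p v. ind (add_mset (dterm k1 (dterm k2 p v) w) (y1 + (y2 + (y3 - {#p#}))), k3))
  = (\<Sum>w\<in>#k2. DA (y1 + y2) (dterm k1 k2 w) y3 k3)
  + (\<Sum>p\<in>#y3. \<Sum>v\<in>#p. \<Sum>w\<in>#(p - {#v#}). ind (add_mset (add_mset (shift v) (add_mset (shift w) (k1 + k2 + (p - {#v#} - {#w#})))) (y1 + (y2 + (y3 - {#p#}))), k3))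
  + (\<Sum>p\<in>#y3. \<Sum>v\<in>#p. ind (add_mset (add_mset (shift (shift v)) (k1 + k2 + (p - {#v#}))) (y1 + (y2 + (y3 - {#p#}))), k3) :: _ \<Rightarrow> 'k::field)"
proof -
  have "(\<Sum>p\<in>#y3. \<Sum>v\<in>#p. \<Sum>w\<in>#dterm k2 p v. ind (add_mset (dterm k1 (dterm k2 p v) w) (y1 + (y2 + (y3 - {#p#}))), k3) :: _ \<Rightarrow> 'k)
     = (\<Sum>p\<in>#y3. \<Sum>v\<in>#p. (\<Sum>w\<in>#k2. ind (add_mset (dterm (dterm k1 k2 w) p v) (y1 + (y2 + (y3 - {#p#}))), k3))
  + (\<Sum>w\<in>#(p - {#v#}). ind (add_mset (add_mset (shift v) (add_mset (shift w) (k1 + k2 + (p - {#v#} - {#w#})))) (y1 + (y2 + (y3 - {#p#}))), k3))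
  + ind (add_mset (add_mset (shift (shift v)) (k1 + k2 + (p - {#v#}))) (y1 + (y2 + (y3 - {#p#}))), k3))"
    by (intro sum_mset_cong) (rule dd_split)
  also have "\<dots> = (\<Sum>p\<in>#y3. \<Sum>v\<in>#p. \<Sum>w\<in>#k2. ind (add_mset (dterm (dterm k1 k2 w) p v) (y1 + (y2 + (y3 - {#p#}))), k3))
  + (\<Sum>p\<in>#y3. \<Sum>v\<in>#p. \<Sum>w\<in>#(p - {#v#}). ind (add_mset (add_mset (shift v) (add_mset (shift w) (k1 + k2 + (p - {#v#} - {#w#})))) (y1 + (y2 + (y3 - {#p#}))), k3))
  + (\<Sum>p\<in>#y3. \<Sum>v\<in>#p. ind (add_mset (add_mset (shift (shift v)) (k1 + k2 + (p - {#v#}))) (y1 + (y2 + (y3 - {#p#}))), k3))"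
    by (simp add: sum_mset.distrib)
  also have "(\<Sum>p\<in>#y3. \<Sum>v\<in>#p. \<Sum>w\<in>#k2. ind (add_mset (dterm (dterm k1 k2 w) p v) (y1 + (y2 + (y3 - {#p#}))), k3))
      = (\<Sum>w\<in>#k2. \<Sum>p\<in>#y3. \<Sum>v\<in>#p. ind (add_mset (dterm (dterm k1 k2 w) p v) (y1 + (y2 + (y3 - {#p#}))), k3) :: _ \<Rightarrow> 'k)"
    by (rule pull)
  also have "\<dots> = (\<Sum>w\<in>#k2. DA (y1 + y2) (dterm k1 k2 w) y3 k3)"
    by (simp add: DA_def add_ac)
  finally show ?thesis .
qed

lemma m4: "(\<Sum>v\<in>#k3. DK y1 k1 (y2 + y3) (dterm k2 k3 v))
  = (\<Sum>w\<in>#k2. DK (y1 + y2) (dterm k1 k2 w) y3 k3)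
  + (\<Sum>v\<in>#k3. \<Sum>w\<in>#(k3 - {#v#}). ind (y1 + (y2 + y3), add_mset (shift v) (add_mset (shift w) (k1 + k2 + (k3 - {#v#} - {#w#})))))
  + (\<Sum>v\<in>#k3. ind (y1 + (y2 + y3), add_mset (shift (shift v)) (k1 + k2 + (k3 - {#v#}))) :: _ \<Rightarrow> 'k::field)"
proof -
  have "(\<Sum>v\<in>#k3. DK y1 k1 (y2 + y3) (dterm k2 k3 v) :: _ \<Rightarrow> 'k)
     = (\<Sum>v\<in>#k3. \<Sum>w\<in>#dterm k2 k3 v. ind (y1 + (y2 + y3), dterm k1 (dterm k2 k3 v) w))"
    by (simp add: DK_def)
  also have "\<dots> = (\<Sum>v\<in>#k3. (\<Sum>w\<in>#k2. ind (y1 + (y2 + y3), dterm (dterm k1 k2 w) k3 v))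
     + (\<Sum>w\<in>#(k3 - {#v#}). ind (y1 + (y2 + y3), add_mset (shift v) (add_mset (shift w) (k1 + k2 + (k3 - {#v#} - {#w#})))))
     + ind (y1 + (y2 + y3), add_mset (shift (shift v)) (k1 + k2 + (k3 - {#v#}))))"
    by (intro sum_mset_cong) (rule dd_split)
  also have "\<dots> = (\<Sum>v\<in>#k3. \<Sum>w\<in>#k2. ind (y1 + (y2 + y3), dterm (dterm k1 k2 w) k3 v))
     + (\<Sum>v\<in>#k3. \<Sum>w\<in>#(k3 - {#v#}). ind (y1 + (y2 + y3), add_mset (shift v) (add_mset (shift w) (k1 + k2 + (k3 - {#v#} - {#w#})))))
     + (\<Sum>v\<in>#k3. ind (y1 + (y2 + y3), add_mset (shift (shift v)) (k1 + k2 + (k3 - {#v#}))))"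
    by (simp add: sum_mset.distrib)
  also have "(\<Sum>v\<in>#k3. \<Sum>w\<in>#k2. ind (y1 + (y2 + y3), dterm (dterm k1 k2 w) k3 v))
     = (\<Sum>w\<in>#k2. \<Sum>v\<in>#k3. ind (y1 + (y2 + y3), dterm (dterm k1 k2 w) k3 v) :: _ \<Rightarrow> 'k)"
    by (rule sum_mset.swap)
  also have "\<dots> = (\<Sum>w\<in>#k2. DK (y1 + y2) (dterm k1 k2 w) y3 k3)"
    by (simp add: DK_def add_ac)
  finally show ?thesis .
qed


definition NN :: "'c mon multiset \<Rightarrow> 'c mon \<Rightarrow> 'c mon multiset \<Rightarrow> 'c mon \<Rightarrow> 'c mon multiset \<Rightarrow> 'c mon \<Rightarrow> ('c mon multiset \<times> 'c mon \<Rightarrow> 'k::field)" where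
  "NN y1 k1 y2 k2 y3 k3 =
     (\<Sum>p\<in>#y3. \<Sum>v\<in>#p. DA (add_mset (dterm k2 p v) (y1 + y2)) k1 (y3 - {#p#}) k3)
   + (\<Sum>p\<in>#y3. \<Sum>v\<in>#p. DK y1 k1 (add_mset (dterm k2 p v) (y2 + (y3 - {#p#}))) k3)
   + (\<Sum>v\<in>#k3. DA (y1 + y2) k1 y3 (dterm k2 k3 v))
   + (\<Sum>p\<in>#y3. \<Sum>v\<in>#p. \<Sum>w\<in>#(p - {#v#}). ind (add_mset (add_mset (shift v) (add_mset (shift w) (k1 + k2 + (p - {#v#} - {#w#})))) (y1 + (y2 + (y3 - {#p#}))), k3))
   + (\<Sum>p\<in>#y3. \<Sum>v\<in>#p. ind (add_mset (add_mset (shift (shift v)) (k1 + k2 + (p - {#v#}))) (y1 + (y2 + (y3 - {#p#}))), k3))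
   + (\<Sum>v\<in>#k3. \<Sum>w\<in>#(k3 - {#v#}). ind (y1 + (y2 + y3), add_mset (shift v) (add_mset (shift w) (k1 + k2 + (k3 - {#v#} - {#w#})))))
   + (\<Sum>v\<in>#k3. ind (y1 + (y2 + y3), add_mset (shift (shift v)) (k1 + k2 + (k3 - {#v#}))))"

lemma main_basis: "lin (tri_basis (y1,k1)) (tri_basis (y2,k2) (y3,k3))
   = lin (\<lambda>a. tri_basis a (y3,k3)) (tri_basis (y1,k1) (y2,k2)) + (NN y1 k1 y2 k2 y3 k3 :: _ \<Rightarrow> 'k::field)"
  apply (simp only: lin_TB)
  apply (simp add: TB_eq DA_add_mset DA_plus sum_mset.distrib m1 m2 m3 m4 NN_def add_ac)
  done


lemma S1: "(\<Sum>p\<in>#y3. \<Sum>v\<in>#p. DA (add_mset (dterm kB p v) (yA + yB)) kA (y3 - {#p#}) k3)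
  = (\<Sum>p\<in>#y3. \<Sum>v\<in>#p. DA (add_mset (dterm kA p v) (yB + yA)) kB (y3 - {#p#}) k3 :: _ \<Rightarrow> 'k::field)"
proof -
  have e: "(\<Sum>p\<in>#y3. \<Sum>v\<in>#p. DA (add_mset (dterm kb p v) (ya + yb)) ka (y3 - {#p#}) k3 :: _ \<Rightarrow> 'k)
     = (\<Sum>p\<in>#y3. \<Sum>s\<in>#(y3 - {#p#}). \<Sum>v\<in>#p. \<Sum>w\<in>#s.
          ind (add_mset (dterm ka s w) (add_mset (dterm kb p v) (ya + yb) + (y3 - {#p#} - {#s#})), k3))" for ya ka yb kb
  proof -
    have "(\<Sum>p\<in>#y3. \<Sum>v\<in>#p. DA (add_mset (dterm kb p v) (ya + yb)) ka (y3 - {#p#}) k3 :: _ \<Rightarrow> 'k)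
     = (\<Sum>p\<in>#y3. \<Sum>v\<in>#p. \<Sum>s\<in>#(y3 - {#p#}). \<Sum>w\<in>#s.
          ind (add_mset (dterm ka s w) (add_mset (dterm kb p v) (ya + yb) + (y3 - {#p#} - {#s#})), k3))"
      by (simp add: DA_def)
    also have "\<dots> = (\<Sum>p\<in>#y3. \<Sum>s\<in>#(y3 - {#p#}). \<Sum>v\<in>#p. \<Sum>w\<in>#s.
          ind (add_mset (dterm ka s w) (add_mset (dterm kb p v) (ya + yb) + (y3 - {#p#} - {#s#})), k3))"
      by (rule sum_mset_cong) (rule sum_mset.swap)
    finally show ?thesis .
  qed
  have "(\<Sum>p\<in>#y3. \<Sum>s\<in>#(y3 - {#p#}). \<Sum>v\<in>#p. \<Sum>w\<in>#s.
          ind (add_mset (dterm kA s w) (add_mset (dterm kB p v) (yA + yB) + (y3 - {#p#} - {#s#})), k3))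
     = (\<Sum>p\<in>#y3. \<Sum>s\<in>#(y3 - {#p#}). \<Sum>v\<in>#s. \<Sum>w\<in>#p.
          ind (add_mset (dterm kA p w) (add_mset (dterm kB s v) (yA + yB) + (y3 - {#p#} - {#s#})), k3) :: _ \<Rightarrow> 'k)"
    using dsum_sym[of "\<lambda>m p s. \<Sum>v\<in>#p. \<Sum>w\<in>#s. ind (add_mset (dterm kA s w) (add_mset (dterm kB p v) (yA + yB) + m), k3)" y3]
    by simp
  also have "\<dots> = (\<Sum>p\<in>#y3. \<Sum>s\<in>#(y3 - {#p#}). \<Sum>w\<in>#p. \<Sum>v\<in>#s.
          ind (add_mset (dterm kA p w) (add_mset (dterm kB s v) (yA + yB) + (y3 - {#p#} - {#s#})), k3))"
    by (intro sum_mset_cong) (rule sum_mset.swap)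
  also have "\<dots> = (\<Sum>p\<in>#y3. \<Sum>s\<in>#(y3 - {#p#}). \<Sum>v\<in>#p. \<Sum>w\<in>#s.
          ind (add_mset (dterm kB s w) (add_mset (dterm kA p v) (yB + yA) + (y3 - {#p#} - {#s#})), k3))"
    by (simp add: add_ac add_mset_commute)
  finally show ?thesis by (simp only: e)
qed

lemma S2: "(\<Sum>p\<in>#y3. \<Sum>v\<in>#p. DK yA kA (add_mset (dterm kB p v) (yB + (y3 - {#p#}))) k3)
  = (\<Sum>v\<in>#k3. DA (yB + yA) kB y3 (dterm kA k3 v) :: _ \<Rightarrow> 'k::field)"
proof -
  have "(\<Sum>p\<in>#y3. \<Sum>v\<in>#p. DK yA kA (add_mset (dterm kB p v) (yB + (y3 - {#p#}))) k3 :: _ \<Rightarrow> 'k)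
      = (\<Sum>p\<in>#y3. \<Sum>v\<in>#p. \<Sum>w\<in>#k3. ind (yA + add_mset (dterm kB p v) (yB + (y3 - {#p#})), dterm kA k3 w))"
    by (simp add: DK_def)
  also have "\<dots> = (\<Sum>w\<in>#k3. \<Sum>p\<in>#y3. \<Sum>v\<in>#p. ind (yA + add_mset (dterm kB p v) (yB + (y3 - {#p#})), dterm kA k3 w))"
    by (rule pull)
  also have "\<dots> = (\<Sum>v\<in>#k3. DA (yB + yA) kB y3 (dterm kA k3 v))"
    by (simp add: DA_def add_ac)
  finally show ?thesis .
qed

lemma S3: "(\<Sum>v\<in>#p. \<Sum>w\<in>#(p - {#v#}). ind (add_mset (add_mset (shift v) (add_mset (shift w) (k1 + k2 + (p - {#v#} - {#w#})))) Y, k3))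
  = (\<Sum>v\<in>#p. \<Sum>w\<in>#(p - {#v#}). ind (add_mset (add_mset (shift v) (add_mset (shift w) (k2 + k1 + (p - {#v#} - {#w#})))) Y, k3) :: _ \<Rightarrow> 'k::field)"
  using dsum_sym[of "\<lambda>m v w. ind (add_mset (add_mset (shift v) (add_mset (shift w) (k1 + k2 + m))) Y, k3) :: _ \<Rightarrow> 'k" p]
  by (simp add: add_ac add_mset_commute)

lemma S5: "(\<Sum>v\<in>#k3. \<Sum>w\<in>#(k3 - {#v#}). ind (Y, add_mset (shift v) (add_mset (shift w) (k1 + k2 + (k3 - {#v#} - {#w#})))))
  = (\<Sum>v\<in>#k3. \<Sum>w\<in>#(k3 - {#v#}). ind (Y, add_mset (shift v) (add_mset (shift w) (k2 + k1 + (k3 - {#v#} - {#w#})))) :: _ \<Rightarrow> 'k::field)"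
  using dsum_sym[of "\<lambda>m v w. ind (Y, add_mset (shift v) (add_mset (shift w) (k1 + k2 + m))) :: _ \<Rightarrow> 'k" k3]
  by (simp add: add_ac add_mset_commute)

lemma NN_sym: "NN y1 k1 y2 k2 y3 k3 = NN y2 k2 y1 k1 y3 k3"
proof -
  have g1: "(\<Sum>p\<in>#y3. \<Sum>v\<in>#p. \<Sum>w\<in>#(p - {#v#}). ind (add_mset (add_mset (shift v) (add_mset (shift w) (k1 + k2 + (p - {#v#} - {#w#})))) (y1 + (y2 + (y3 - {#p#}))), k3))
    = (\<Sum>p\<in>#y3. \<Sum>v\<in>#p. \<Sum>w\<in>#(p - {#v#}). ind (add_mset (add_mset (shift v) (add_mset (shift w) (k2 + k1 + (p - {#v#} - {#w#})))) (y2 + (y1 + (y3 - {#p#}))), k3) :: _ \<Rightarrow> 'k::field)"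
    by (rule sum_mset_cong) (simp add: S3 add.left_commute)
  show ?thesis
    unfolding NN_def S1[where yA=y1 and kA=k1 and yB=y2 and kB=k2] S2[where yA=y1 and kA=k1 and yB=y2 and kB=k2]
      S2[where yA=y2 and kA=k2 and yB=y1 and kB=k1] g1
    by (simp add: S5 add_ac)
qed

lemma preLie_basis: "lin (tri_basis a) (tri_basis b c) - lin (\<lambda>x. tri_basis x c) (tri_basis a b)
  = lin (tri_basis b) (tri_basis a c) - lin (\<lambda>x. tri_basis x c) (tri_basis b a :: _ \<Rightarrow> 'k::field)"
  by (cases a; cases b; cases c) (simp add: main_basis NN_sym[of _ _ _ _ ])



definition op2 :: "('a \<Rightarrow> 'b \<Rightarrow> ('c \<Rightarrow> 'k::comm_ring_1)) \<Rightarrow> ('a \<Rightarrow> 'k) \<Rightarrow> ('b \<Rightarrow> 'k) \<Rightarrow> ('c \<Rightarrow> 'k)" where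
  "op2 p X Y = lin (\<lambda>a. lin (p a) Y) X"

lemma bilin_op2: "bilin p = op2 p"
  by (intro ext) (simp add: bilin_lin op2_def)

lemma fs_op2[simp]: "(\<And>a b. fs (p a b)) \<Longrightarrow> fs X \<Longrightarrow> fs Y \<Longrightarrow> fs (op2 p X Y)"
  by (simp add: op2_def)

lemma op2_ind[simp]: "op2 p (ind a) (ind b) = p a b"
  by (simp add: op2_def)

lemma op2_ind1: "op2 p (ind a) Y = lin (p a) Y"
  by (simp add: op2_def)
lemma op2_ind2: "fs X \<Longrightarrow> op2 p X (ind b) = lin (\<lambda>a. p a b) X"
  by (simp add: op2_def)

lemma op2_add1: "fs X \<Longrightarrow> fs X' \<Longrightarrow> op2 p (X + X') Y = op2 p X Y + op2 p X' Y"
  by (simp add: op2_def lin_add)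
lemma op2_add2: "fs Y \<Longrightarrow> fs Y' \<Longrightarrow> op2 p X (Y + Y') = op2 p X Y + op2 p X Y'"
  by (simp add: op2_def lin_add lin_fadd)
lemma op2_diff1: "fs X \<Longrightarrow> fs X' \<Longrightarrow> op2 p (X - X') Y = op2 p X Y - op2 p X' Y"
  by (simp add: op2_def lin_diff)
lemma op2_diff2: "fs Y \<Longrightarrow> fs Y' \<Longrightarrow> op2 p X (Y - Y') = op2 p X Y - op2 p X Y'"
  by (simp add: op2_def lin_diff lin_fdiff)
lemma op2_smult1: "fs X \<Longrightarrow> op2 p (c \<cdot>\<^sub>s X) Y = c \<cdot>\<^sub>s op2 p X Y"
  by (simp add: op2_def lin_smult)
lemma op2_smult2: "fs Y \<Longrightarrow> op2 p X (c \<cdot>\<^sub>s Y) = c \<cdot>\<^sub>s op2 p X Y"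
  by (simp add: op2_def lin_smult lin_fsmult)
lemma op2_zero1[simp]: "op2 p 0 Y = 0"
  by (simp add: op2_def)
lemma op2_zero2[simp]: "op2 p X 0 = 0"
  by (simp add: op2_def)

lemma linfs_id[intro!]: "linfs (\<lambda>Z. Z)"
  by (simp add: linfs_def)

lemma linfs_op2_2[intro!]: "linfs T \<Longrightarrow> (\<And>Z. fs Z \<Longrightarrow> fs (T Z)) \<Longrightarrow> fs X \<Longrightarrow> linfs (\<lambda>Z. op2 p X (T Z))"
  by (simp add: linfs_def op2_add2 op2_smult2)
lemma linfs_op2_1[intro!]: "linfs T \<Longrightarrow> (\<And>Z. fs Z \<Longrightarrow> fs (T Z)) \<Longrightarrow> linfs (\<lambda>Z. op2 p (T Z) Y)"
  by (simp add: linfs_def op2_add1 op2_smult1)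
lemma linfs_lin1[intro!]: "linfs T \<Longrightarrow> (\<And>Z. fs Z \<Longrightarrow> fs (T Z)) \<Longrightarrow> linfs (\<lambda>Z. lin f (T Z))"
  by (simp add: linfs_def lin_add lin_smult)
lemma linfs_add'[intro!]: "linfs T \<Longrightarrow> linfs S \<Longrightarrow> linfs (\<lambda>X. T X + S X)"
  by (rule linfs_add)
lemma linfs_diff'[intro!]: "linfs T \<Longrightarrow> linfs S \<Longrightarrow> linfs (\<lambda>X. T X - S X)"
  by (rule linfs_diff)

lemma ext2: fixes F G :: "('a \<Rightarrow> 'k::comm_ring_1) \<Rightarrow> ('b \<Rightarrow> 'k) \<Rightarrow> ('c \<Rightarrow> 'k)"
  assumes "\<And>X. fs X \<Longrightarrow> linfs (F X)" "\<And>X. fs X \<Longrightarrow> linfs (G X)"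
    "\<And>b. linfs (\<lambda>X. F X (ind b))" "\<And>b. linfs (\<lambda>X. G X (ind b))"
    "\<And>a b. F (ind a) (ind b) = G (ind a) (ind b)" "fs X" "fs Y"
  shows "F X Y = G X Y"
proof -
  have "F X (ind b) = G X (ind b)" for b
    using linfs_ext[OF assms(3)[of b] assms(4)[of b] _ assms(6)] assms(5) by blast
  then show ?thesis using linfs_ext[OF assms(1)[OF assms(6)] assms(2)[OF assms(6)] _ assms(7)] by blast
qed

lemma ext3: fixes F G :: "('a \<Rightarrow> 'k::comm_ring_1) \<Rightarrow> ('b \<Rightarrow> 'k) \<Rightarrow> ('c \<Rightarrow> 'k) \<Rightarrow> ('d \<Rightarrow> 'k)"
  assumes "\<And>X Y. fs X \<Longrightarrow> fs Y \<Longrightarrow> linfs (F X Y)" "\<And>X Y. fs X \<Longrightarrow> fs Y \<Longrightarrow> linfs (G X Y)"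
    "\<And>X c. fs X \<Longrightarrow> linfs (\<lambda>Y. F X Y (ind c))" "\<And>X c. fs X \<Longrightarrow> linfs (\<lambda>Y. G X Y (ind c))"
    "\<And>b c. linfs (\<lambda>X. F X (ind b) (ind c))" "\<And>b c. linfs (\<lambda>X. G X (ind b) (ind c))"
    "\<And>a b c. F (ind a) (ind b) (ind c) = G (ind a) (ind b) (ind c)" "fs X" "fs Y" "fs Z"
  shows "F X Y Z = G X Y Z"
proof -
  have "F X' (ind b) (ind c) = G X' (ind b) (ind c)" if "fs X'" for X' b c
    using linfs_ext[OF assms(5)[of b c] assms(6)[of b c] _ that] assms(7) by blast
  then have "F X Y' (ind c) = G X Y' (ind c)" if "fs Y'" for Y' c
    using linfs_ext[OF assms(3)[OF assms(8)] assms(4)[OF assms(8)] _ that] assms(8) by blast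
  then show ?thesis using linfs_ext[OF assms(1)[OF assms(8,9)] assms(2)[OF assms(8,9)] _ assms(10)] assms(9) by blast
qed

abbreviation NB :: "('c mon multiset \<times> 'c mon \<Rightarrow> 'k::field) \<Rightarrow> ('c mon multiset \<times> 'c mon \<Rightarrow> 'k) \<Rightarrow> ('c mon multiset \<times> 'c mon \<Rightarrow> 'k)"
  where "NB \<equiv> op2 tri_basis"

lemma L_nabla_eq: "L_nabla = NB"
  by (simp add: L_nabla_def bilin_op2)

lemma preLie_fs: "fs X \<Longrightarrow> fs Y \<Longrightarrow> fs Z \<Longrightarrow>
  NB X (NB Y Z) - NB (NB X Y) Z = NB Y (NB X Z) - NB (NB Y X) (Z :: _ \<Rightarrow> 'k::field)"
  apply (rule ext3[where F="\<lambda>X Y Z. NB X (NB Y Z) - NB (NB X Y) Z" and G="\<lambda>X Y Z. NB Y (NB X Z) - NB (NB Y X) Z"])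
  apply (auto simp: preLie_basis op2_ind1 op2_ind2)
  done



definition smp :: "'c mon multiset \<Rightarrow> 'c mon multiset \<times> 'c mon \<Rightarrow> ('c mon multiset \<times> 'c mon \<Rightarrow> 'k::field)" where
  "smp y' b = ind (y' + fst b, snd b)"
definition mup :: "'c mon multiset \<Rightarrow> 'c mon multiset \<Rightarrow> ('c mon multiset \<Rightarrow> 'k::field)" where
  "mup y y' = ind (y + y')"
definition rhp :: "'c mon multiset \<times> 'c mon \<Rightarrow> 'c mon multiset \<Rightarrow> ('c mon multiset \<Rightarrow> 'k::field)" where
  "rhp a y = tri_aroma (fst a) (snd a) y"
definition E :: "('c mon multiset \<Rightarrow> 'k::field) \<Rightarrow> ('c mon multiset \<times> 'c mon \<Rightarrow> 'k)" where
  "E f = lin (\<lambda>y. ind (y, {#})) f"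

lemma L_smul_eq: "L_smul = op2 smp"
  unfolding L_smul_def bilin_op2[symmetric] by (intro ext) (simp add: bilin_def smp_def case_prod_beta)
lemma R_mult_eq: "R_mult = op2 mup"
  unfolding R_mult_def bilin_op2[symmetric] by (intro ext) (simp add: bilin_def mup_def)
lemma L_rho_eq: "L_rho = op2 rhp"
  unfolding L_rho_def bilin_op2[symmetric] by (intro ext) (simp add: bilin_def rhp_def case_prod_beta)

lemma fs_smp[simp]: "fs (smp a b)" by (simp add: smp_def)
lemma fs_mup[simp]: "fs (mup a b)" by (simp add: mup_def)
lemma fs_AR[simp]: "fs (AR y1 k y :: _ \<Rightarrow> 'k::field)" by (simp add: AR_def)
lemma fs_TA[simp]: "fs (tri_aroma y1 k y :: _ \<Rightarrow> 'k::field)" by (simp add: TA_eq)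
lemma fs_rhp[simp]: "fs (rhp a b)" by (simp add: rhp_def TA_eq)
lemma fs_E[simp]: "fs f \<Longrightarrow> fs (E f)" by (simp add: E_def)

lemma linfs_E[intro!]: "linfs T \<Longrightarrow> (\<And>Z. fs Z \<Longrightarrow> fs (T Z)) \<Longrightarrow> linfs (\<lambda>Z. E (T Z))"
  unfolding E_def by (rule linfs_lin1)

lemma E_apply: "fs f \<Longrightarrow> E f (y, {#}) = f y"
proof -
  assume "fs f"
  have "E f (y, {#}) = (\<Sum>a\<in>supp f. if y = a then f a else 0)"
    unfolding E_def lin_apply by (intro sum.cong) (auto simp: ind_def)
  also have "\<dots> = f y" using \<open>fs f\<close> by (simp add: sum.delta')
  finally show ?thesis .
qed

lemma E_inj: "fs f \<Longrightarrow> fs g \<Longrightarrow> E f = E g \<Longrightarrow> f = g"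
  by (metis E_apply ext)

lemma E_diff: "fs f \<Longrightarrow> fs g \<Longrightarrow> E (f - g) = E f - E g"
  by (simp add: E_def lin_diff)
lemma E_add: "fs f \<Longrightarrow> fs g \<Longrightarrow> E (f + g) = E f + E g"
  by (simp add: E_def lin_add)

abbreviation SM :: "('c mon multiset \<Rightarrow> 'k::field) \<Rightarrow> ('c mon multiset \<times> 'c mon \<Rightarrow> 'k) \<Rightarrow> ('c mon multiset \<times> 'c mon \<Rightarrow> 'k)"
  where "SM \<equiv> op2 smp"
abbreviation MU :: "('c mon multiset \<Rightarrow> 'k::field) \<Rightarrow> ('c mon multiset \<Rightarrow> 'k) \<Rightarrow> ('c mon multiset \<Rightarrow> 'k)"
  where "MU \<equiv> op2 mup"
abbreviation RH :: "('c mon multiset \<times> 'c mon \<Rightarrow> 'k::field) \<Rightarrow> ('c mon multiset \<Rightarrow> 'k) \<Rightarrow> ('c mon multiset \<Rightarrow> 'k)"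
  where "RH \<equiv> op2 rhp"

lemma lin_AR: "lin f (AR y1 k y) = (\<Sum>p\<in>#y. \<Sum>v\<in>#p. f (add_mset (dterm k p v) (y1 + (y - {#p#}))))"
  by (simp add: AR_def lin_sum_mset)

lemma I2_basis: "tri_basis (y1,k1) (y + y2, k2) =
    lin (\<lambda>a. smp a (y2, k2)) (tri_aroma y1 k1 y) + lin (smp y) (tri_basis (y1,k1) (y2,k2) :: _ \<Rightarrow> 'k::field)"
  apply (simp add: TB_eq TA_eq lin_AR lin_add lin_DA lin_DK DA_plus)
  apply (simp add: smp_def DA_def DK_def add_ac)
  done

lemma I3_basis: "tri_basis (y + y2, k2) b = lin (smp y) (tri_basis (y2,k2) b :: _ \<Rightarrow> 'k::field)"
  apply (cases b)
  apply (simp add: TB_eq lin_add lin_DA lin_DK DA_plus)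
  apply (simp add: smp_def DA_def DK_def add_ac)
  done

lemma I4_basis: "tri_basis (y1,k1) (y, {#}) = lin (\<lambda>y. ind (y, {#})) (tri_aroma y1 k1 y :: _ \<Rightarrow> 'k::field)"
  by (simp add: TB_eq TA_eq lin_AR DA_def DK_def)

lemma I2: "fs X \<Longrightarrow> fs f \<Longrightarrow> fs Y \<Longrightarrow> NB X (SM f Y) = SM (RH X f) Y + SM f (NB X Y :: _ \<Rightarrow> 'k::field)"
  apply (rule ext3[where F="\<lambda>X f Y. NB X (SM f Y)" and G="\<lambda>X f Y. SM (RH X f) Y + SM f (NB X Y)"])
  apply (auto simp: op2_ind1 op2_ind2 I2_basis I3_basis smp_def rhp_def)
  done

lemma I3: "fs X \<Longrightarrow> fs f \<Longrightarrow> fs Y \<Longrightarrow> NB (SM f Y) X = SM f (NB Y X :: _ \<Rightarrow> 'k::field)"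
  apply (rule ext3[where F="\<lambda>f Y X. NB (SM f Y) X" and G="\<lambda>f Y X. SM f (NB Y X)"])
  apply (auto simp: op2_ind1 op2_ind2 I2_basis I3_basis smp_def rhp_def)
  done



lemma I4: "fs X \<Longrightarrow> fs f \<Longrightarrow> NB X (E f) = E (RH X f :: _ \<Rightarrow> 'k::field)"
  apply (rule ext2[where F="\<lambda>X f. NB X (E f)" and G="\<lambda>X f. E (RH X f)"])
  apply (auto simp: op2_ind1 op2_ind2 rhp_def E_def I4_basis)
  done

lemma I5: "fs g \<Longrightarrow> fs f \<Longrightarrow> SM g (E f) = E (MU g f :: _ \<Rightarrow> 'k::field)"
  apply (rule ext2[where F="\<lambda>g f. SM g (E f)" and G="\<lambda>g f. E (MU g f)"])
  apply (auto simp: op2_ind1 op2_ind2 smp_def mup_def E_def)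
  done

lemma SM_assoc: "fs f \<Longrightarrow> fs g \<Longrightarrow> fs X \<Longrightarrow> SM (MU f g) X = SM f (SM g X :: _ \<Rightarrow> 'k::field)"
  apply (rule ext3[where F="\<lambda>f g X. SM (MU f g) X" and G="\<lambda>f g X. SM f (SM g X)"])
  apply (auto simp: op2_ind1 op2_ind2 smp_def mup_def add_ac)
  done

lemma MU_assoc: "fs f \<Longrightarrow> fs g \<Longrightarrow> fs h \<Longrightarrow> MU (MU f g) h = MU f (MU g h :: _ \<Rightarrow> 'k::field)"
  apply (rule ext3[where F="\<lambda>f g h. MU (MU f g) h" and G="\<lambda>f g h. MU f (MU g h)"])
  apply (auto simp: op2_ind1 op2_ind2 mup_def add_ac)
  done

lemma MU_comm: "fs f \<Longrightarrow> fs g \<Longrightarrow> MU f g = MU g (f :: _ \<Rightarrow> 'k::field)"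
  apply (rule ext2[where F="\<lambda>f g. MU f g" and G="\<lambda>f g. MU g f"])
  apply (auto simp: op2_ind1 op2_ind2 mup_def add_ac)
  done

lemma MU_one: "fs f \<Longrightarrow> MU (ind {#}) f = (f :: _ \<Rightarrow> 'k::field)"
proof -
  assume a: "fs f"
  have "lin (mup {#}) f = lin ind f" by (rule lin_cong) (simp add: mup_def)
  then show ?thesis using a by (simp add: op2_ind1 lin_id)
qed

lemma SM_one: "fs X \<Longrightarrow> SM (ind {#}) X = (X :: _ \<Rightarrow> 'k::field)"
proof -
  assume "fs X"
  have "lin (smp {#}) X = lin ind X" by (rule lin_cong) (simp add: smp_def)
  then show ?thesis using \<open>fs X\<close> by (simp add: op2_ind1 lin_id)
qed

lemma RH_der: "fs X \<Longrightarrow> fs f \<Longrightarrow> fs g \<Longrightarrow> RH X (MU f g) = MU (RH X f) g + MU f (RH X g :: _ \<Rightarrow> 'k::field)"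
proof -
  assume a: "fs X" "fs f" "fs g"
  have "E (RH X (MU f g)) = NB X (E (MU f g))" using a by (simp add: I4)
  also have "\<dots> = NB X (SM f (E g))" using a by (simp add: I5)
  also have "\<dots> = SM (RH X f) (E g) + SM f (NB X (E g))" using a by (simp add: I2)
  also have "\<dots> = E (MU (RH X f) g) + E (MU f (RH X g))" using a by (simp add: I4 I5)
  also have "\<dots> = E (MU (RH X f) g + MU f (RH X g))" using a by (simp add: E_add)
  finally show ?thesis using a by (intro E_inj) auto
qed

lemma RH_SM: "fs X \<Longrightarrow> fs f \<Longrightarrow> fs g \<Longrightarrow> RH (SM g X) f = MU g (RH X f :: _ \<Rightarrow> 'k::field)"
proof -
  assume a: "fs X" "fs f" "fs g"
  have "E (RH (SM g X) f) = NB (SM g X) (E f)" using a by (simp add: I4)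
  also have "\<dots> = SM g (NB X (E f))" using a by (simp add: I3)
  also have "\<dots> = E (MU g (RH X f))" using a by (simp add: I4 I5)
  finally show ?thesis using a by (intro E_inj) auto
qed

lemma RH_br: "fs X \<Longrightarrow> fs Y \<Longrightarrow> fs f \<Longrightarrow>
   RH (NB X Y - NB Y X) f = RH X (RH Y f) - RH Y (RH X f :: _ \<Rightarrow> 'k::field)"
proof -
  assume a: "fs X" "fs Y" "fs f"
  have pl: "NB X (NB Y (E f)) - NB (NB X Y) (E f) = NB Y (NB X (E f)) - NB (NB Y X) (E f)"
    using a by (intro preLie_fs) auto
  have "E (RH (NB X Y - NB Y X) f) = NB (NB X Y - NB Y X) (E f)" using a by (simp add: I4)
  also have "\<dots> = NB (NB X Y) (E f) - NB (NB Y X) (E f)" using a by (simp add: op2_diff1)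
  also have "\<dots> = NB X (NB Y (E f)) - NB Y (NB X (E f))" using pl by (simp add: algebra_simps)
  also have "\<dots> = E (RH X (RH Y f)) - E (RH Y (RH X f))" using a by (simp add: I4)
  also have "\<dots> = E (RH X (RH Y f) - RH Y (RH X f))" using a by (simp add: E_diff)
  finally show ?thesis using a by (intro E_inj) auto
qed



definition BR :: "'c mon multiset set" where "BR = {y. \<forall>p\<in>#y. p \<in> M0_mons}"
definition BL :: "('c mon multiset \<times> 'c mon) set" where "BL = {(y,k). (\<forall>p\<in>#y. p \<in> M0_mons) \<and> k \<in> Mm1_mons}"

lemma R_car_iff: "f \<in> R_car \<longleftrightarrow> fs f \<and> supp f \<subseteq> BR"
  by (auto simp: R_car_def BR_def simp del: supp_iff)
lemma L_car_iff: "X \<in> L_car \<longleftrightarrow> fs X \<and> supp X \<subseteq> BL"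
  by (auto simp: L_car_def BL_def simp del: supp_iff)

lemma supp_sum_mset: "supp (\<Sum>x\<in>#M. g x) \<subseteq> (\<Union>x\<in>set_mset M. supp (g x :: _ \<Rightarrow> 'k::comm_ring_1))"
proof (induction M)
  case empty then show ?case by (simp add: supp_def)
next
  case (add x M)
  then show ?case using supp_add[of "g x" "\<Sum>x\<in>#M. g x"] by auto
qed

lemma supp_op2: "supp (op2 p X Y) \<subseteq> (\<Union>a\<in>supp X. \<Union>b\<in>supp Y. supp (p a b))"
proof -
  have "supp (op2 p X Y) \<subseteq> (\<Union>a\<in>supp X. supp (lin (p a) Y))"
    unfolding op2_def by (rule supp_lin)
  also have "\<dots> \<subseteq> (\<Union>a\<in>supp X. \<Union>b\<in>supp Y. supp (p a b))"
    using supp_lin[of "p _" Y] by blast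
  finally show ?thesis .
qed

lemma in_supp_sum_mset: "z \<in> supp (\<Sum>x\<in>#M. g x :: _ \<Rightarrow> 'k::comm_ring_1) \<Longrightarrow> \<exists>x. x \<in># M \<and> z \<in> supp (g x)"
  using supp_sum_mset[of g M] by blast

lemma op2_closed: "(\<And>a b. a \<in> A \<Longrightarrow> b \<in> B \<Longrightarrow> supp (p a b) \<subseteq> C) \<Longrightarrow> supp X \<subseteq> A \<Longrightarrow> supp Y \<subseteq> B
   \<Longrightarrow> supp (op2 p X Y) \<subseteq> C"
  using supp_op2[of p X Y] by blast

lemma wt_add_mset[simp]: "wt (add_mset x M) = snd x + wt M" by (simp add: wt_def)
lemma wt_plus[simp]: "wt (A + B) = wt A + wt B" by (simp add: wt_def)
lemma wt_empty[simp]: "wt {#} = 0" by (simp add: wt_def)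
lemma wt_remove: "v \<in># p \<Longrightarrow> wt (p - {#v#}) = wt p - snd v"
  using wt_add_mset[of v "p - {#v#}"] insert_DiffM[of v p] by simp

lemma valid_add_mset[simp]: "valid_mon (add_mset x M) \<longleftrightarrow> snd x \<ge> -1 \<and> valid_mon M" by (simp add: valid_mon_def)
lemma valid_plus[simp]: "valid_mon (A + B) \<longleftrightarrow> valid_mon A \<and> valid_mon B" by (auto simp: valid_mon_def)
lemma valid_remove: "valid_mon p \<Longrightarrow> valid_mon (p - {#v#})" by (auto simp: valid_mon_def dest: in_diffD)

lemma valid_dterm: "valid_mon k \<Longrightarrow> valid_mon p \<Longrightarrow> v \<in># p \<Longrightarrow> valid_mon (dterm k p v)"
  by (auto simp: dterm_eq shift_def valid_remove) (auto simp: valid_mon_def)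

lemma wt_dterm: "v \<in># p \<Longrightarrow> wt (dterm k p v) = wt k + wt p + 1"
  by (simp add: dterm_eq shift_def wt_remove)

lemma dterm_M0: "p \<in> M0_mons \<Longrightarrow> v \<in># p \<Longrightarrow> k \<in> Mm1_mons \<Longrightarrow> dterm k p v \<in> M0_mons"
  by (auto simp: M0_mons_def Mm1_mons_def valid_dterm wt_dterm) (simp add: dterm_eq)

lemma dterm_Mm1: "k2 \<in> Mm1_mons \<Longrightarrow> v \<in># k2 \<Longrightarrow> k1 \<in> Mm1_mons \<Longrightarrow> dterm k1 k2 v \<in> Mm1_mons"
  by (auto simp: Mm1_mons_def valid_dterm wt_dterm)

lemma supp_smp: "a \<in> BR \<Longrightarrow> b \<in> BL \<Longrightarrow> supp (smp a b :: _ \<Rightarrow> 'k::field) \<subseteq> BL"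
  by (auto simp: smp_def BR_def BL_def)
lemma supp_mup: "a \<in> BR \<Longrightarrow> b \<in> BR \<Longrightarrow> supp (mup a b :: _ \<Rightarrow> 'k::field) \<subseteq> BR"
  by (auto simp: mup_def BR_def)

lemma supp_TB: "a \<in> BL \<Longrightarrow> b \<in> BL \<Longrightarrow> supp (tri_basis a b :: _ \<Rightarrow> 'k::field) \<subseteq> BL"
proof -
  assume a: "a \<in> BL" "b \<in> BL"
  obtain y1 k1 y2 k2 where ab: "a = (y1,k1)" "b = (y2,k2)" by (cases a, cases b) auto
  have h: "k1 \<in> Mm1_mons" "k2 \<in> Mm1_mons" "\<forall>q\<in>#y1. q \<in> M0_mons" "\<forall>q\<in>#y2. q \<in> M0_mons"
    using a unfolding ab BL_def by auto
  have DA: "supp (DA y1 k1 y2 k2 :: _ \<Rightarrow> 'k) \<subseteq> BL"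
  proof
    fix z assume z: "z \<in> supp (DA y1 k1 y2 k2 :: _ \<Rightarrow> 'k)"
    obtain p where p: "p \<in># y2" "z \<in> supp (\<Sum>v\<in>#p. ind (add_mset (dterm k1 p v) (y1 + (y2 - {#p#})), k2) :: _ \<Rightarrow> 'k)"
      using in_supp_sum_mset[OF z[unfolded DA_def]] by blast
    obtain v where v0: "v \<in># p" "z \<in> supp (ind (add_mset (dterm k1 p v) (y1 + (y2 - {#p#})), k2) :: _ \<Rightarrow> 'k)"
      using in_supp_sum_mset[OF p(2)] by blast
    then have v: "v \<in># p" "z = (add_mset (dterm k1 p v) (y1 + (y2 - {#p#})), k2)"
      by (simp_all only: supp_ind singleton_iff)
    have "dterm k1 p v \<in> M0_mons" using h p v by (intro dterm_M0) auto
    then show "z \<in> BL" using h v(2) by (auto simp: BL_def dest: in_diffD)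
  qed
  have DK: "supp (DK y1 k1 y2 k2 :: _ \<Rightarrow> 'k) \<subseteq> BL"
  proof
    fix z assume z: "z \<in> supp (DK y1 k1 y2 k2 :: _ \<Rightarrow> 'k)"
    obtain v where v0: "v \<in># k2" "z \<in> supp (ind (y1 + y2, dterm k1 k2 v) :: _ \<Rightarrow> 'k)"
      using in_supp_sum_mset[OF z[unfolded DK_def]] by blast
    then have v: "z = (y1 + y2, dterm k1 k2 v)"
      by (simp_all only: supp_ind singleton_iff)
    have "dterm k1 k2 v \<in> Mm1_mons" using h v0 by (intro dterm_Mm1) auto
    then show "z \<in> BL" using h v by (auto simp: BL_def)
  qed
  show ?thesis unfolding ab TB_eq using DA DK supp_add[of "DA y1 k1 y2 k2" "DK y1 k1 y2 k2"] by blast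
qed

lemma supp_rhp: "a \<in> BL \<Longrightarrow> y \<in> BR \<Longrightarrow> supp (rhp a y :: _ \<Rightarrow> 'k::field) \<subseteq> BR"
proof
  fix z assume a: "a \<in> BL" "y \<in> BR" and z0: "z \<in> supp (rhp a y :: _ \<Rightarrow> 'k)"
  obtain y1 k where ab: "a = (y1,k)" by (cases a) auto
  have h: "k \<in> Mm1_mons" "\<forall>q\<in>#y1. q \<in> M0_mons" "\<forall>q\<in>#y. q \<in> M0_mons"
    using a unfolding ab BL_def BR_def by auto
  have z: "z \<in> supp (\<Sum>p\<in>#y. \<Sum>v\<in>#p. ind (add_mset (dterm k p v) (y1 + (y - {#p#}))) :: _ \<Rightarrow> 'k)"
    using z0 unfolding ab rhp_def TA_eq AR_def fst_conv snd_conv .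
  obtain p where p: "p \<in># y" "z \<in> supp (\<Sum>v\<in>#p. ind (add_mset (dterm k p v) (y1 + (y - {#p#}))) :: _ \<Rightarrow> 'k)"
    using in_supp_sum_mset[OF z] by blast
  obtain v where v0: "v \<in># p" "z \<in> supp (ind (add_mset (dterm k p v) (y1 + (y - {#p#}))) :: _ \<Rightarrow> 'k)"
    using in_supp_sum_mset[OF p(2)] by blast
  then have v: "z = add_mset (dterm k p v) (y1 + (y - {#p#}))"
    by (simp_all only: supp_ind singleton_iff)
  have "dterm k p v \<in> M0_mons" using h p v0 by (intro dterm_M0) auto
  then show "z \<in> BR" using h v by (auto simp: BR_def dest: in_diffD)
qed



lemma subspace_R: "subspace (R_car :: ('c mon multiset \<Rightarrow> 'k::field) set)"
proof -
  have A: "supp (f + g) \<subseteq> BR" if "supp f \<subseteq> BR" "supp g \<subseteq> BR" for f g :: "_ \<Rightarrow> 'k"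
    using that supp_add[of f g] by blast
  have S: "supp (c \<cdot>\<^sub>s f) \<subseteq> BR" if "supp f \<subseteq> BR" for f :: "_ \<Rightarrow> 'k" and c
    using that supp_smult[of c f] by blast
  show ?thesis unfolding subspace_def
  proof (intro conjI ballI allI)
    show "0 \<in> R_car" by (simp add: R_car_iff)
    show "f + g \<in> R_car" if "f \<in> R_car" "g \<in> R_car" for f g :: "_ \<Rightarrow> 'k" using that A[of f g] by (simp add: R_car_iff)
    show "c \<cdot>\<^sub>s f \<in> R_car" if "f \<in> R_car" for c and f :: "_ \<Rightarrow> 'k" using that S[of f c] by (simp add: R_car_iff)
  qed
qed

lemma subspace_L: "subspace (L_car :: ('c mon multiset \<times> 'c mon \<Rightarrow> 'k::field) set)"
proof -
  have A: "supp (f + g) \<subseteq> BL" if "supp f \<subseteq> BL" "supp g \<subseteq> BL" for f g :: "_ \<Rightarrow> 'k"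
    using that supp_add[of f g] by blast
  have S: "supp (c \<cdot>\<^sub>s f) \<subseteq> BL" if "supp f \<subseteq> BL" for f :: "_ \<Rightarrow> 'k" and c
    using that supp_smult[of c f] by blast
  show ?thesis unfolding subspace_def
  proof (intro conjI ballI allI)
    show "0 \<in> L_car" by (simp add: L_car_iff)
    show "f + g \<in> L_car" if "f \<in> L_car" "g \<in> L_car" for f g :: "_ \<Rightarrow> 'k" using that A[of f g] by (simp add: L_car_iff)
    show "c \<cdot>\<^sub>s f \<in> L_car" if "f \<in> L_car" for c and f :: "_ \<Rightarrow> 'k" using that S[of f c] by (simp add: L_car_iff)
  qed
qed

lemma R_diff: "f \<in> R_car \<Longrightarrow> g \<in> R_car \<Longrightarrow> f - g \<in> R_car"
  unfolding R_car_iff using supp_diff[of f g] by auto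
lemma L_diff: "f \<in> L_car \<Longrightarrow> g \<in> L_car \<Longrightarrow> f - g \<in> L_car"
  unfolding L_car_iff using supp_diff[of f g] by auto

lemma MU_R: assumes "f \<in> R_car" "g \<in> R_car" shows "MU f g \<in> (R_car :: (_ \<Rightarrow> 'k::field) set)"
proof -
  have "supp (MU f g) \<subseteq> BR" by (rule op2_closed[OF supp_mup]) (use assms in \<open>auto simp: R_car_iff L_car_iff\<close>)
  then show ?thesis using assms by (simp add: R_car_iff L_car_iff)
qed
lemma SM_L: assumes "f \<in> R_car" "X \<in> L_car" shows "SM f X \<in> (L_car :: (_ \<Rightarrow> 'k::field) set)"
proof -
  have "supp (SM f X) \<subseteq> BL" by (rule op2_closed[OF supp_smp]) (use assms in \<open>auto simp: R_car_iff L_car_iff\<close>)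
  then show ?thesis using assms by (simp add: R_car_iff L_car_iff)
qed
lemma NB_L: assumes "X \<in> L_car" "Y \<in> L_car" shows "NB X Y \<in> (L_car :: (_ \<Rightarrow> 'k::field) set)"
proof -
  have "supp (NB X Y) \<subseteq> BL" by (rule op2_closed[OF supp_TB]) (use assms in \<open>auto simp: R_car_iff L_car_iff\<close>)
  then show ?thesis using assms by (simp add: R_car_iff L_car_iff)
qed
lemma RH_R: assumes "X \<in> L_car" "f \<in> R_car" shows "RH X f \<in> (R_car :: (_ \<Rightarrow> 'k::field) set)"
proof -
  have "supp (RH X f) \<subseteq> BR" by (rule op2_closed[OF supp_rhp]) (use assms in \<open>auto simp: R_car_iff L_car_iff\<close>)
  then show ?thesis using assms by (simp add: R_car_iff L_car_iff)
qed

lemma one_R: "ind {#} \<in> (R_car :: (_ \<Rightarrow> 'k::field) set)"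
  by (simp add: R_car_iff BR_def)

lemma fsR: "f \<in> R_car \<Longrightarrow> fs f" by (simp add: R_car_iff)
lemma fsL: "X \<in> L_car \<Longrightarrow> fs X" by (simp add: L_car_iff)

lemma smult_diff: "c \<cdot>\<^sub>s (A - B) = c \<cdot>\<^sub>s A - c \<cdot>\<^sub>s (B :: _ \<Rightarrow> 'k::comm_ring_1)"
  by (simp add: smult_def fun_eq_iff right_diff_distrib)
lemma jacobi: "fs X \<Longrightarrow> fs Y \<Longrightarrow> fs Z \<Longrightarrow>
   (NB X (NB Y Z - NB Z Y) - NB (NB Y Z - NB Z Y) X) + (NB Y (NB Z X - NB X Z) - NB (NB Z X - NB X Z) Y)
 + (NB Z (NB X Y - NB Y X) - NB (NB X Y - NB Y X) Z) = (0 :: _ \<Rightarrow> 'k::field)"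
proof -
  assume a: "fs X" "fs Y" "fs Z"
  have P1: "NB X (NB Y Z) - NB (NB X Y) Z = NB Y (NB X Z) - NB (NB Y X) Z" using a by (intro preLie_fs)
  have P2: "NB Y (NB Z X) - NB (NB Y Z) X = NB Z (NB Y X) - NB (NB Z Y) X" using a by (intro preLie_fs)
  have P3: "NB Z (NB X Y) - NB (NB Z X) Y = NB X (NB Z Y) - NB (NB X Z) Y" using a by (intro preLie_fs)
  have e: "(NB X (NB Y Z - NB Z Y) - NB (NB Y Z - NB Z Y) X) + (NB Y (NB Z X - NB X Z) - NB (NB Z X - NB X Z) Y)
    + (NB Z (NB X Y - NB Y X) - NB (NB X Y - NB Y X) Z)
    = ((NB X (NB Y Z) - NB (NB X Y) Z) - (NB Y (NB X Z) - NB (NB Y X) Z))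
    + ((NB Y (NB Z X) - NB (NB Y Z) X) - (NB Z (NB Y X) - NB (NB Z Y) X))
    + ((NB Z (NB X Y) - NB (NB Z X) Y) - (NB X (NB Z Y) - NB (NB X Z) Y))"
    using a by (simp add: op2_diff1 op2_diff2 algebra_simps)
  show ?thesis unfolding e P1 P2 P3 by simp
qed


lemma ca: "comm_algebra (R_car :: ('c mon multiset \<Rightarrow> 'k::field) set) MU (ind {#})"
  unfolding comm_algebra_def
  apply (intro conjI ballI allI subspace_R one_R MU_R)
  apply assumption+
  apply (rule MU_assoc; simp add: fsR)
  apply (rule MU_comm; simp add: fsR)
  apply (rule MU_one; simp add: fsR)
  apply (rule op2_add2; simp add: fsR)
  apply (rule op2_smult1; simp add: fsR)
  done

lemma md: "is_module (R_car :: ('c mon multiset \<Rightarrow> 'k::field) set) MU (ind {#}) L_car SM"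
  unfolding is_module_def
  apply (intro conjI ballI allI subspace_L SM_L)
  apply assumption+
  apply (rule op2_add2; simp add: fsL)
  apply (rule op2_add1; simp add: fsR)
  apply (rule SM_assoc; simp add: fsR fsL)
  apply (rule SM_one; simp add: fsL)
  apply (rule op2_smult1; simp add: fsR)
  done

lemma der: "X \<in> L_car \<Longrightarrow> is_derivation (R_car :: ('c mon multiset \<Rightarrow> 'k::field) set) MU (RH X)"
  unfolding is_derivation_def klinear_on_def
  apply (intro conjI ballI allI RH_R)
  apply assumption+
  apply (rule op2_add2; simp add: fsR)
  apply (rule op2_smult2; simp add: fsR)
  apply (rule RH_der; simp add: fsR fsL)
  done

theorem proposition3p1:
  shows "pre_lie_rinehart (R_car :: ('c::finite mon multiset \<Rightarrow> 'k::field) set) R_mult R_one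
           L_car L_smul L_rho L_nabla"
  unfolding pre_lie_rinehart_def Let_def R_mult_eq L_smul_eq L_rho_eq L_nabla_eq R_one_def
  apply (intro conjI ballI allI ca md der)
  apply assumption
  subgoal by (rule op2_add1; simp add: fsL)
  subgoal by (rule RH_SM; simp add: fsR fsL)
  subgoal by (rule NB_L)
  subgoal by (simp add: klinear_on_def op2_add2 op2_smult2 fsL)
  subgoal by (simp add: NB_L L_diff)
  subgoal by (simp add: klinear_on_def op2_add2 op2_add1 op2_smult2 op2_smult1 smult_diff fsL)
  subgoal by (simp add: klinear_on_def op2_add2 op2_add1 op2_smult2 op2_smult1 smult_diff fsL)
  subgoal by simp
  subgoal by (rule jacobi; simp add: fsL)
  subgoal by (rule op2_smult1; simp add: fsL)
  subgoal by (rule RH_br; simp add: fsR fsL)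
  subgoal by (simp add: I2 I3 op2_diff2 fsL fsR)
  subgoal by (rule preLie_fs; simp add: fsL)
  done


end
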